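(* The minimizer $\hat{\mathbf{w}}$ of the criterion $\hat d_\lambda(\mathbf{w})$ is unique with probability one, and is given by $$\hat{\mathbf{w}}_{\hat{\mathcal{E}}} = \hat{\mathbf{J}}_{\hat{\mathcal{E}}}^{-1}\left[\mathrm{diag}\{\hat{\mathbf{J}}_{\hat{\mathcal{E}}}\} - \frac{\lambda}{n}\boldsymbol{\eta}\right], \qquad \hat{\mathbf{w}}_{\setminus\hat{\mathcal{E}}} = 0,$$ where $\boldsymbol{\eta}$ is the sub-gradient of the weighted $L_1$-norm $\sum_{j<k}|w_{jk}|/S_{jk}^2$, i.e. $$\eta_{jk} = \frac{1}{S_{jk}^2}\times\begin{cases} 0, & j=k,\\ 1, & j\neq k,\ w_{jk}>0,\\ -1, & j\neq k,\ w_{jk}<0,\\ \in[-1,1], & j\neq k,\ w_{jk}=0,\end{cases}$$ and $$\hat{\mathcal{E}} = \left\{ jk : \left|\mathrm{diag}\{\hat{\mathbf{J}}\}_{jk} - \hat{\mathbf{J}}_{jk,\cdot}\hat{\mathbf{w}}\right| \ge \frac{\lambda}{n S_{jk}^2}\mathbb{I}(j\neq k)\right\},$$ where $\setminus\hat{\mathcal{E}}$ denotes the complement index set $\{jk: 1\le j\le k\le p\}\setminus\hat{\mathcal{E}}$, $\mathbb{I}(\cdot)$ is the indicator function, $\hat{\mathbf{J}}_{jk,\cdot}$ is the row of $\hat{\mathbf{J}}$ corresponding to index $jk$, and $\mathrm{diag}\{\hat{\mathbf{J}}\}_{jk}$ is the element of $\mathrm{diag}\{\hat{\mathbf{J}}\}$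 corresponding to index $jk$.
   Context: Let $\boldsymbol{X}=(X_1,\dots,X_p)^\top$ be a $p$-variate random vector with zero mean and positive definite covariance $\boldsymbol{\Theta}=(\theta_{jk})$, and let $\boldsymbol{\theta}=\mathrm{vech}(\boldsymbol{\Theta})$, a vector of length $m=p(p+1)/2$. Given an i.i.d. sample $\boldsymbol{X}^{(1)},\dots,\boldsymbol{X}^{(n)}$, let $\mathbf{S}=(S_{jk}) = n^{-1}\sum_{i=1}^n \boldsymbol{X}^{(i)}\boldsymbol{X}^{(i)\top}$ and $\mathbf{s}=\mathrm{vech}(\mathbf{S})$. For $j=1,\dots,p$ let $\ell_{jj}(\boldsymbol{\theta};\boldsymbol{X}) = -\log\theta_{jj} - X_j^2/\theta_{jj}$ and for $j<k$ let $\ell_{jk}(\boldsymbol{\theta};\boldsymbol{X}) = -\log(\theta_{jj}\theta_{kk}-\theta_{jk}^2) - (\theta_{kk}X_j^2 - 2\theta_{jk}X_jX_k + \theta_{jj}X_k^2)/(\theta_{jj}\theta_{kk}-\theta_{jk}^2)$ be the univariate and bivariate Gaussian log-likelihood contributions, and let $\mathbf{u}_{jk}(\boldsymbol{\theta};\boldsymbol{X}) = \partial\ell_{jk}(\boldsymbol{\theta};\boldsymbol{X})/\partial\boldsymbol{\theta}\in\mathbb{R}^m$ ($j\le k$) be the corresponding score vectors (the marginal score $\mathbf{u}_{jj}$ has a single nonzero entry, the one for $\theta_{jj}$; the bivariate score $\mathbf{u}_{jk}$ has three nonzero entries, those for $\theta_{jj},\theta_{kk},\theta_{jk}$). Let $\mathbf{U}(\boldsymbol{\theta};\boldsymbol{X})$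 be the $m\times m$ matrix whose columns are the scores $\{\mathbf{u}_{jk}, j\le k\}$, so the pairwise likelihood score with coefficient vector $\mathbf{w}=(w_{jk})_{j\le k}\in\mathbb{R}^m$ is $\mathbf{U}(\boldsymbol{\theta};\boldsymbol{X})\mathbf{w}=\sum_{j\le k} w_{jk}\mathbf{u}_{jk}$. Define the plug-in score covariance matrix $\hat{\mathbf{J}} = n^{-1}\sum_{i=1}^n \mathbf{U}(\mathbf{s};\boldsymbol{X}^{(i)})^\top\mathbf{U}(\mathbf{s};\boldsymbol{X}^{(i)})$, and, for $\lambda\ge 0$, the empirical criterion $\hat d_\lambda(\mathbf{w}) = \frac12\mathbf{w}^\top\hat{\mathbf{J}}\mathbf{w} - \mathbf{w}^\top\mathrm{diag}\{\hat{\mathbf{J}}\} + \frac{\lambda}{n}\sum_{j<k}\frac{|w_{jk}|}{S_{jk}^2}$, where $\mathrm{diag}\{\hat{\mathbf{J}}\}$ is the vector of diagonal entries of $\hat{\mathbf{J}}$. For an index set $\mathcal{E}\subseteq\{jk:1\le j\le k\le p\}$, $\mathbf{a}_{\mathcal{E}}$ denotes the sub-vector of $\mathbf{a}\in\mathbb{R}^m$ indexed by $\mathcal{E}$ and $\mathbf{M}_{\mathcal{E}}$ the sub-matrix of an $m\times m$ matrix $\mathbf{M}$ with rows and columns in $\mathcal{E}$. *)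

theory Defs
  imports "HOL-Probability.Probability"
begin

(* Index set {jk : j <= k}; coordinates of R^m are indexed by pairs (j,k) with j <= k. *)
definition idx :: "('p::{finite,linorder} \<times> 'p::{finite,linorder}) set" where
  "idx = {(j,k). j \<le> k}"

(* vectors in R^m: functions on pairs vanishing outside idx *)
definition vecs :: "(('p::{finite,linorder} \<times> 'p::{finite,linorder}) \<Rightarrow> real) set" where
  "vecs = {w. \<forall>a. a \<notin> idx \<longrightarrow> w a = 0}"

(* univariate / bivariate Gaussian log-likelihood contributions; theta (j,k) = theta_jk for j <= k *)
definition ell :: "'p::{finite,linorder} \<Rightarrow> 'p::{finite,linorder} \<Rightarrow> ('p::{finite,linorder} \<times> 'p::{finite,linorder} \<Rightarrow> real) \<Rightarrow> real^'p::{finite,linorder} \<Rightarrow> real" where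
  "ell j k \<theta> x =
     (if j = k then - ln (\<theta> (j,j)) - (x$j)^2 / \<theta> (j,j)
      else - ln (\<theta> (j,j) * \<theta> (k,k) - (\<theta> (j,k))^2)
           - (\<theta> (k,k) * (x$j)^2 - 2 * \<theta> (j,k) * (x$j) * (x$k) + \<theta> (j,j) * (x$k)^2)
             / (\<theta> (j,j) * \<theta> (k,k) - (\<theta> (j,k))^2))"

definition score :: "'p::{finite,linorder} \<Rightarrow> 'p::{finite,linorder} \<Rightarrow> ('p::{finite,linorder} \<times> 'p::{finite,linorder} \<Rightarrow> real) \<Rightarrow> real^'p::{finite,linorder} \<Rightarrow> ('p::{finite,linorder} \<times> 'p::{finite,linorder}) \<Rightarrow> real" where
  "score j k \<theta> x ab = (if ab \<in> idx then deriv (\<lambda>t. ell j k (\<theta>(ab := t)) x) (\<theta> ab) else 0)"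

definition Umat :: "('p::{finite,linorder} \<times> 'p::{finite,linorder} \<Rightarrow> real) \<Rightarrow> real^'p::{finite,linorder} \<Rightarrow> ('p::{finite,linorder} \<times> 'p::{finite,linorder}) \<Rightarrow> ('p::{finite,linorder} \<times> 'p::{finite,linorder}) \<Rightarrow> real" where
  "Umat \<theta> x ab c = score (fst c) (snd c) \<theta> x ab"

definition Smat :: "nat \<Rightarrow> (nat \<Rightarrow> real^'p::{finite,linorder}) \<Rightarrow> 'p::{finite,linorder} \<times> 'p::{finite,linorder} \<Rightarrow> real" where
  "Smat n X jk = (if jk \<in> idx then (1 / real n) * (\<Sum>i<n. (X i)$(fst jk) * (X i)$(snd jk)) else 0)"

definition Jhat :: "nat \<Rightarrow> (nat \<Rightarrow> real^'p::{finite,linorder}) \<Rightarrow> ('p::{finite,linorder} \<times> 'p::{finite,linorder}) \<Rightarrow> ('p::{finite,linorder} \<times> 'p::{finite,linorder}) \<Rightarrow> real" where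
  "Jhat n X a b = (if a \<in> idx \<and> b \<in> idx then
      (1 / real n) * (\<Sum>i<n. \<Sum>c\<in>idx. Umat (Smat n X) (X i) c a * Umat (Smat n X) (X i) c b)
    else 0)"

definition dhat :: "real \<Rightarrow> nat \<Rightarrow> (nat \<Rightarrow> real^'p::{finite,linorder}) \<Rightarrow> ('p::{finite,linorder} \<times> 'p::{finite,linorder} \<Rightarrow> real) \<Rightarrow> real" where
  "dhat lam n X w =
     (1/2) * (\<Sum>a\<in>idx. \<Sum>b\<in>idx. w a * Jhat n X a b * w b)
     - (\<Sum>a\<in>idx. w a * Jhat n X a a)
     + (lam / real n) * (\<Sum>jk\<in>{(j,k). j < k}. \<bar>w jk\<bar> / (Smat n X jk)^2)"

definition is_minimizer :: "real \<Rightarrow> nat \<Rightarrow> (nat \<Rightarrow> real^'p::{finite,linorder}) \<Rightarrow> ('p::{finite,linorder} \<times> 'p::{finite,linorder} \<Rightarrow> real) \<Rightarrow> bool" where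
  "is_minimizer lam n X w \<longleftrightarrow> w \<in> vecs \<and> (\<forall>v\<in>vecs. dhat lam n X w \<le> dhat lam n X v)"

definition is_subgrad :: "nat \<Rightarrow> (nat \<Rightarrow> real^'p::{finite,linorder}) \<Rightarrow> ('p::{finite,linorder} \<times> 'p::{finite,linorder} \<Rightarrow> real) \<Rightarrow> ('p::{finite,linorder} \<times> 'p::{finite,linorder} \<Rightarrow> real) \<Rightarrow> bool" where
  "is_subgrad n X w \<eta> \<longleftrightarrow>
     (\<forall>j k. j \<le> k \<longrightarrow>
        (if j = k then \<eta> (j,k) = 0
         else if w (j,k) > 0 then \<eta> (j,k) = 1 / (Smat n X (j,k))^2
         else if w (j,k) < 0 then \<eta> (j,k) = - 1 / (Smat n X (j,k))^2
         else (\<exists>t. -1 \<le> t \<and> t \<le> 1 \<and> \<eta> (j,k) = t / (Smat n X (j,k))^2)))"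

definition is_inverse_on :: "'i set \<Rightarrow> ('i \<Rightarrow> 'i \<Rightarrow> real) \<Rightarrow> ('i \<Rightarrow> 'i \<Rightarrow> real) \<Rightarrow> bool" where
  "is_inverse_on E A B \<longleftrightarrow>
     (\<forall>a\<in>E. \<forall>c\<in>E. (\<Sum>b\<in>E. A a b * B b c) = (if a = c then 1 else 0)) \<and>
     (\<forall>a\<in>E. \<forall>c\<in>E. (\<Sum>b\<in>E. B a b * A b c) = (if a = c then 1 else 0))"

definition invertible_on :: "'i set \<Rightarrow> ('i \<Rightarrow> 'i \<Rightarrow> real) \<Rightarrow> bool" where
  "invertible_on E A \<longleftrightarrow> (\<exists>B. is_inverse_on E A B)"

definition mat_inv_on :: "'i set \<Rightarrow> ('i \<Rightarrow> 'i \<Rightarrow> real) \<Rightarrow> ('i \<Rightarrow> 'i \<Rightarrow> real)" where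
  "mat_inv_on E A = (SOME B. is_inverse_on E A B)"

definition Ehat :: "real \<Rightarrow> nat \<Rightarrow> (nat \<Rightarrow> real^'p::{finite,linorder}) \<Rightarrow> ('p::{finite,linorder} \<times> 'p::{finite,linorder} \<Rightarrow> real) \<Rightarrow> ('p::{finite,linorder} \<times> 'p::{finite,linorder}) set" where
  "Ehat lam n X w = {jk\<in>idx.
      \<bar>Jhat n X jk jk - (\<Sum>b\<in>idx. Jhat n X jk b * w b)\<bar>
        \<ge> lam / (real n * (Smat n X jk)^2) * (if fst jk \<noteq> snd jk then 1 else 0)}"

end

theory Submission
  imports Defs
begin


definition qf :: "'i set \<Rightarrow> ('i\<Rightarrow>'i\<Rightarrow>real) \<Rightarrow> ('i\<Rightarrow>real) \<Rightarrow> real" where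
  "qf I J w = (\<Sum>a\<in>I. \<Sum>b\<in>I. w a * J a b * w b)"

definition Fobj :: "'i set \<Rightarrow> 'i set \<Rightarrow> ('i\<Rightarrow>'i\<Rightarrow>real) \<Rightarrow> ('i\<Rightarrow>real) \<Rightarrow> ('i\<Rightarrow>real) \<Rightarrow> real" where
  "Fobj I P J c w = qf I J w / 2 - (\<Sum>a\<in>I. w a * J a a) + (\<Sum>a\<in>P. c a * \<bar>w a\<bar>)"

definition gr :: "'i set \<Rightarrow> ('i\<Rightarrow>'i\<Rightarrow>real) \<Rightarrow> ('i\<Rightarrow>real) \<Rightarrow> 'i \<Rightarrow> real" where
  "gr I J w a = J a a - (\<Sum>b\<in>I. J a b * w b)"

definition kkt :: "'i set \<Rightarrow> 'i set \<Rightarrow> ('i\<Rightarrow>'i\<Rightarrow>real) \<Rightarrow> ('i\<Rightarrow>real) \<Rightarrow> ('i\<Rightarrow>real) \<Rightarrow> bool" where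
  "kkt I P J c w \<longleftrightarrow> (\<forall>a\<in>I. (a \<notin> P \<longrightarrow> gr I J w a = 0) \<and>
     (a \<in> P \<longrightarrow> (w a > 0 \<longrightarrow> gr I J w a = c a) \<and> (w a < 0 \<longrightarrow> gr I J w a = - c a)
        \<and> (w a = 0 \<longrightarrow> \<bar>gr I J w a\<bar> \<le> c a)))"

lemma qf_expand:
  assumes sym: "\<And>a b. a \<in> I \<Longrightarrow> b \<in> I \<Longrightarrow> J a b = J b a"
  shows "qf I J v = qf I J w + 2 * (\<Sum>a\<in>I. (v a - w a) * (\<Sum>b\<in>I. J a b * w b)) + qf I J (\<lambda>a. v a - w a)"
proof -
  define d where "d = (\<lambda>a. v a - w a)"
  have v: "v a = w a + d a" for a by (simp add: d_def)
  have "qf I J v = (\<Sum>a\<in>I. \<Sum>b\<in>I. w a * J a b * w b + w a * J a b * d b + d a * J a b * w b + d a * J a b * d b)"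
    unfolding qf_def v by (intro sum.cong refl) (simp add: algebra_simps)
  also have "\<dots> = qf I J w + (\<Sum>a\<in>I. \<Sum>b\<in>I. w a * J a b * d b) + (\<Sum>a\<in>I. \<Sum>b\<in>I. d a * J a b * w b) + qf I J d"
    unfolding qf_def by (simp add: sum.distrib)
  also have "(\<Sum>a\<in>I. \<Sum>b\<in>I. w a * J a b * d b) = (\<Sum>a\<in>I. \<Sum>b\<in>I. d a * J a b * w b)"
    by (subst sum.swap) (intro sum.cong refl, simp add: sym mult.commute)
  also have "(\<Sum>a\<in>I. \<Sum>b\<in>I. d a * J a b * w b) = (\<Sum>a\<in>I. d a * (\<Sum>b\<in>I. J a b * w b))"
    by (simp add: sum_distrib_left mult.assoc)
  finally show ?thesis by (simp add: d_def)
qed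

lemma kkt_lower:
  assumes fin: "finite I" and PI: "P \<subseteq> I"
    and sym: "\<And>a b. a \<in> I \<Longrightarrow> b \<in> I \<Longrightarrow> J a b = J b a"
    and K: "kkt I P J c w" and cnn: "\<And>a. a \<in> P \<Longrightarrow> c a \<ge> 0"
  shows "Fobj I P J c v - Fobj I P J c w \<ge> qf I J (\<lambda>a. v a - w a) / 2"
proof -
  define h where "h a = (\<Sum>b\<in>I. J a b * w b)" for a
  have ex: "qf I J v = qf I J w + 2 * (\<Sum>a\<in>I. (v a - w a) * h a) + qf I J (\<lambda>a. v a - w a)"
    unfolding h_def by (rule qf_expand[OF sym])
  have s1: "(\<Sum>a\<in>I. - (v a - w a) * gr I J w a) = (\<Sum>a\<in>I. (v a - w a) * h a) - (\<Sum>a\<in>I. v a * J a a) + (\<Sum>a\<in>I. w a * J a a)"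
    unfolding gr_def h_def[symmetric] by (simp add: algebra_simps sum_subtractf sum.distrib)
  have s2: "(\<Sum>a\<in>P. c a * (\<bar>v a\<bar> - \<bar>w a\<bar>)) = (\<Sum>a\<in>P. c a * \<bar>v a\<bar>) - (\<Sum>a\<in>P. c a * \<bar>w a\<bar>)"
    by (simp add: algebra_simps sum_subtractf)
  have e: "Fobj I P J c v - Fobj I P J c w = qf I J (\<lambda>a. v a - w a) / 2
     + (\<Sum>a\<in>I. - (v a - w a) * gr I J w a) + (\<Sum>a\<in>P. c a * (\<bar>v a\<bar> - \<bar>w a\<bar>))"
    unfolding Fobj_def s1 s2 ex by (simp add: field_simps)
  have split: "(\<Sum>a\<in>I. f a) = (\<Sum>a\<in>P. f a) + (\<Sum>a\<in>I - P. f a)" for f :: "_ \<Rightarrow> real"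
    using fin PI by (metis add.commute sum.subset_diff)
  have "(\<Sum>a\<in>I. - (v a - w a) * gr I J w a) + (\<Sum>a\<in>P. c a * (\<bar>v a\<bar> - \<bar>w a\<bar>))
     = (\<Sum>a\<in>P. - (v a - w a) * gr I J w a + c a * (\<bar>v a\<bar> - \<bar>w a\<bar>)) + (\<Sum>a\<in>I - P. - (v a - w a) * gr I J w a)"
    by (simp add: split sum.distrib)
  also have "\<dots> \<ge> 0"
  proof (rule add_nonneg_nonneg; rule sum_nonneg)
    fix a assume a: "a \<in> P"
    then have aI: "a \<in> I" using PI by auto
    consider "w a > 0" | "w a < 0" | "w a = 0" by linarith
    then show "0 \<le> - (v a - w a) * gr I J w a + c a * (\<bar>v a\<bar> - \<bar>w a\<bar>)"
    proof cases
      case 1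
      then have g: "gr I J w a = c a" using K a aI unfolding kkt_def by auto
      have "c a \<ge> 0" using cnn a by auto
      have "- (v a - w a) * gr I J w a + c a * (\<bar>v a\<bar> - \<bar>w a\<bar>) = c a * (\<bar>v a\<bar> - v a)"
        using 1 g by (simp add: algebra_simps)
      moreover have "\<bar>v a\<bar> - v a \<ge> 0" by simp
      ultimately show ?thesis using \<open>c a \<ge> 0\<close> by simp
    next
      case 2
      then have g: "gr I J w a = - c a" using K a aI unfolding kkt_def by auto
      have "c a \<ge> 0" using cnn a by auto
      have "- (v a - w a) * gr I J w a + c a * (\<bar>v a\<bar> - \<bar>w a\<bar>) = c a * (\<bar>v a\<bar> + v a)"
        using 2 g by (simp add: algebra_simps)
      moreover have "\<bar>v a\<bar> + v a \<ge> 0" by simp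
      ultimately show ?thesis using \<open>c a \<ge> 0\<close> by simp
    next
      case 3
      then have g: "\<bar>gr I J w a\<bar> \<le> c a" using K a aI unfolding kkt_def by auto
      have "v a * gr I J w a \<le> \<bar>v a\<bar> * \<bar>gr I J w a\<bar>"
        by (metis abs_ge_self abs_mult)
      also have "\<dots> \<le> \<bar>v a\<bar> * c a" using g by (simp add: mult_left_mono)
      finally show ?thesis using 3 by (simp add: algebra_simps)
    qed
  next
    fix a assume a: "a \<in> I - P"
    then have "gr I J w a = 0" using K unfolding kkt_def by auto
    then show "0 \<le> - (v a - w a) * gr I J w a" by simp
  qed
  finally show ?thesis using e by linarith
qed


lemma Fobj_diff:
  assumes fin: "finite I" and PI: "P \<subseteq> I"
    and sym: "\<And>a b. a \<in> I \<Longrightarrow> b \<in> I \<Longrightarrow> J a b = J b a"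
  shows "Fobj I P J c v - Fobj I P J c w = qf I J (\<lambda>a. v a - w a) / 2
     + (\<Sum>a\<in>I. - (v a - w a) * gr I J w a) + (\<Sum>a\<in>P. c a * (\<bar>v a\<bar> - \<bar>w a\<bar>))"
proof -
  define h where "h a = (\<Sum>b\<in>I. J a b * w b)" for a
  have ex: "qf I J v = qf I J w + 2 * (\<Sum>a\<in>I. (v a - w a) * h a) + qf I J (\<lambda>a. v a - w a)"
    unfolding h_def by (rule qf_expand[OF sym])
  have s1: "(\<Sum>a\<in>I. - (v a - w a) * gr I J w a) = (\<Sum>a\<in>I. (v a - w a) * h a) - (\<Sum>a\<in>I. v a * J a a) + (\<Sum>a\<in>I. w a * J a a)"
    unfolding gr_def h_def[symmetric] by (simp add: algebra_simps sum_subtractf sum.distrib)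
  have s2: "(\<Sum>a\<in>P. c a * (\<bar>v a\<bar> - \<bar>w a\<bar>)) = (\<Sum>a\<in>P. c a * \<bar>v a\<bar>) - (\<Sum>a\<in>P. c a * \<bar>w a\<bar>)"
    by (simp add: algebra_simps sum_subtractf)
  show ?thesis
    unfolding Fobj_def s1 s2 ex by (simp add: field_simps)
qed

lemma R1:
  fixes A B \<delta> :: real
  assumes "\<delta> > 0" and H: "\<And>t. 0 < t \<Longrightarrow> t < \<delta> \<Longrightarrow> 0 \<le> A * t + B * t\<^sup>2"
  shows "0 \<le> A"
proof (rule ccontr)
  assume "\<not> 0 \<le> A"
  then have A: "A < 0" by simp
  define t where "t = min (\<delta>/2) (- A / (2 * (\<bar>B\<bar> + 1)))"
  have "- A / (2 * (\<bar>B\<bar> + 1)) > 0" using A by (intro divide_pos_pos) auto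
  then have t0: "t > 0" using assms(1) by (simp add: t_def)
  have t1: "t < \<delta>" using assms(1) by (simp add: t_def)
  have "t \<le> - A / (2 * (\<bar>B\<bar> + 1))" by (simp add: t_def)
  then have "t * (2 * (\<bar>B\<bar> + 1)) \<le> - A"
    using pos_le_divide_eq[of "2 * (\<bar>B\<bar> + 1)" t "- A"] by (simp add: add_pos_nonneg)
  then have e1: "2 * t + 2 * (\<bar>B\<bar> * t) \<le> - A" by (simp add: algebra_simps)
  have m: "B * t \<le> \<bar>B\<bar> * t" using t0 mult_right_mono[of B "\<bar>B\<bar>" t] by simp
  from e1 m t0 have "B * t \<le> - A / 2" by linarith
  then have "A + B * t < 0" using A by linarith
  then have "(A + B * t) * t < 0" using t0 by (simp add: mult_neg_pos)
  moreover have "0 \<le> A * t + B * t\<^sup>2" using H t0 t1 by simp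
  ultimately show False by (simp add: algebra_simps power2_eq_square)
qed

lemma oneD_kkt:
  fixes h g c w :: real
  assumes H: "\<And>t. 0 \<le> h * t\<^sup>2 - g * t + c * (\<bar>w + t\<bar> - \<bar>w\<bar>)"
  shows "(w > 0 \<longrightarrow> g = c) \<and> (w < 0 \<longrightarrow> g = - c) \<and> (w = 0 \<longrightarrow> \<bar>g\<bar> \<le> c)"
proof (intro conjI impI)
  assume w: "w > 0"
  have "0 \<le> c - g"
  proof (rule R1[OF w, of _ h])
    fix t :: real assume t: "0 < t" "t < w"
    then have "\<bar>w + t\<bar> = w + t" "\<bar>w\<bar> = w" using w by auto
    then show "0 \<le> (c - g) * t + h * t\<^sup>2" using H[of t] by (simp add: algebra_simps)
  qed
  moreover have "0 \<le> g - c"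
  proof (rule R1[OF w, of _ h])
    fix t :: real assume t: "0 < t" "t < w"
    then have "\<bar>w + - t\<bar> = w - t" "\<bar>w\<bar> = w" using w by auto
    then show "0 \<le> (g - c) * t + h * t\<^sup>2" using H[of "-t"] by (simp add: algebra_simps)
  qed
  ultimately show "g = c" by simp
next
  assume w: "w < 0"
  then have w': "- w > 0" by simp
  have "0 \<le> - g - c"
  proof (rule R1[OF w', of _ h])
    fix t :: real assume t: "0 < t" "t < - w"
    then have "\<bar>w + t\<bar> = - w - t" "\<bar>w\<bar> = - w" using w by auto
    then show "0 \<le> (- g - c) * t + h * t\<^sup>2" using H[of t] by (simp add: algebra_simps)
  qed
  moreover have "0 \<le> g + c"
  proof (rule R1[OF w', of _ h])
    fix t :: real assume t: "0 < t" "t < - w"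
    then have "\<bar>w + - t\<bar> = - w + t" "\<bar>w\<bar> = - w" using w by auto
    then show "0 \<le> (g + c) * t + h * t\<^sup>2" using H[of "-t"] by (simp add: algebra_simps)
  qed
  ultimately show "g = - c" by simp
next
  assume w: "w = 0"
  have "0 \<le> c - g"
  proof (rule R1[OF zero_less_one, of _ h])
    fix t :: real assume t: "0 < t" "t < 1"
    then have "\<bar>w + t\<bar> = t" "\<bar>w\<bar> = 0" using w by auto
    then show "0 \<le> (c - g) * t + h * t\<^sup>2" using H[of t] by (simp add: algebra_simps)
  qed
  moreover have "0 \<le> g + c"
  proof (rule R1[OF zero_less_one, of _ h])
    fix t :: real assume t: "0 < t" "t < 1"
    then have "\<bar>w + - t\<bar> = t" "\<bar>w\<bar> = 0" using w by auto
    then show "0 \<le> (g + c) * t + h * t\<^sup>2" using H[of "-t"] by (simp add: algebra_simps)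
  qed
  ultimately show "\<bar>g\<bar> \<le> c" by simp
qed

lemma sum_delta_r:
  assumes "finite I" "a \<in> I"
  shows "(\<Sum>b\<in>I. f b * (if b = a then t else 0)) = f a * (t::real)"
proof -
  have "(\<Sum>b\<in>I. f b * (if b = a then t else 0)) = (\<Sum>b\<in>I. if b = a then f b * t else 0)"
    by (intro sum.cong) auto
  also have "\<dots> = f a * t" using assms by (simp add: sum.delta)
  finally show ?thesis .
qed

lemma sum_delta_l:
  assumes "finite I" "a \<in> I"
  shows "(\<Sum>b\<in>I. (if b = a then t else 0) * f b) = t * (f a::real)"
  using sum_delta_r[OF assms, of f t] by (simp add: mult.commute)

lemma min_kkt:
  assumes fin: "finite I" and PI: "P \<subseteq> I"
    and sym: "\<And>a b. a \<in> I \<Longrightarrow> b \<in> I \<Longrightarrow> J a b = J b a"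
    and min: "\<And>a t. a \<in> I \<Longrightarrow> Fobj I P J c w \<le> Fobj I P J c (w(a := w a + t))"
  shows "kkt I P J c w"
  unfolding kkt_def
proof (intro ballI)
  fix a assume aI: "a \<in> I"
  define pc where "pc = (if a \<in> P then c a else 0)"
  have key: "0 \<le> (J a a / 2) * t\<^sup>2 - gr I J w a * t + pc * (\<bar>w a + t\<bar> - \<bar>w a\<bar>)" for t
  proof -
    let ?v = "w(a := w a + t)"
    have d: "(\<lambda>b. ?v b - w b) = (\<lambda>b. if b = a then t else 0)" by auto
    have q: "qf I J (\<lambda>b. ?v b - w b) = t\<^sup>2 * J a a"
    proof -
      have "qf I J (\<lambda>b. ?v b - w b) = (\<Sum>x\<in>I. (if x = a then t else 0) * J x a * t)"
        unfolding d qf_def by (intro sum.cong refl sum_delta_r[OF fin aI])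
      also have "\<dots> = (\<Sum>x\<in>I. (if x = a then t else 0) * (J x a * t))"
        by (simp add: mult.assoc)
      also have "\<dots> = t\<^sup>2 * J a a" by (simp add: sum_delta_l[OF fin aI] power2_eq_square)
      finally show ?thesis .
    qed
    have l: "(\<Sum>b\<in>I. - (?v b - w b) * gr I J w b) = - t * gr I J w a"
    proof -
      have "(\<Sum>b\<in>I. - (?v b - w b) * gr I J w b) = (\<Sum>b\<in>I. (if b = a then t else 0) * (- gr I J w b))"
        unfolding d by (intro sum.cong) auto
      also have "\<dots> = t * (- gr I J w a)" by (rule sum_delta_l[OF fin aI])
      finally show ?thesis by simp
    qed
    have p: "(\<Sum>b\<in>P. c b * (\<bar>?v b\<bar> - \<bar>w b\<bar>)) = pc * (\<bar>w a + t\<bar> - \<bar>w a\<bar>)"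
    proof -
      have "(\<Sum>b\<in>P. c b * (\<bar>?v b\<bar> - \<bar>w b\<bar>)) = (\<Sum>b\<in>P. if b = a then c a * (\<bar>w a + t\<bar> - \<bar>w a\<bar>) else 0)"
        by (intro sum.cong) auto
      also have "\<dots> = pc * (\<bar>w a + t\<bar> - \<bar>w a\<bar>)"
        using fin PI by (simp add: sum.delta pc_def finite_subset)
      finally show ?thesis .
    qed
    have fd: "Fobj I P J c ?v - Fobj I P J c w = qf I J (\<lambda>b. ?v b - w b) / 2
      + (\<Sum>b\<in>I. - (?v b - w b) * gr I J w b) + (\<Sum>b\<in>P. c b * (\<bar>?v b\<bar> - \<bar>w b\<bar>))"
      by (rule Fobj_diff) (use fin PI sym in auto)
    have "0 \<le> Fobj I P J c ?v - Fobj I P J c w" using min[OF aI, of t] by simp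
    also have "\<dots> = (J a a / 2) * t\<^sup>2 - gr I J w a * t + pc * (\<bar>w a + t\<bar> - \<bar>w a\<bar>)"
      unfolding fd q l p by (simp add: algebra_simps)
    finally show ?thesis .
  qed
  note K = oneD_kkt[OF key]
  show "(a \<notin> P \<longrightarrow> gr I J w a = 0) \<and>
     (a \<in> P \<longrightarrow> (w a > 0 \<longrightarrow> gr I J w a = c a) \<and> (w a < 0 \<longrightarrow> gr I J w a = - c a)
        \<and> (w a = 0 \<longrightarrow> \<bar>gr I J w a\<bar> \<le> c a))"
  proof (intro conjI impI)
    assume "a \<notin> P"
    then have "pc = 0" by (simp add: pc_def)
    then have k0: "0 \<le> (J a a / 2) * t\<^sup>2 - gr I J w a * t" for t using key[of t] by simp
    have "0 \<le> - gr I J w a"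
      by (rule R1[OF zero_less_one, of _ "J a a / 2"]) (use k0 in \<open>auto simp: algebra_simps\<close>)
    moreover have "0 \<le> gr I J w a"
      by (rule R1[OF zero_less_one, of _ "J a a / 2"]) (use k0[of "- _"] in \<open>auto simp: algebra_simps\<close>)
    ultimately show "gr I J w a = 0" by simp
  qed (use K in \<open>auto simp: pc_def\<close>)
qed


definition zoff :: "'i set \<Rightarrow> ('i \<Rightarrow> real) \<Rightarrow> bool" where
  "zoff I v \<longleftrightarrow> (\<forall>a. a \<notin> I \<longrightarrow> v a = 0)"

lemma pd_invertible:
  fixes J :: "'i::finite \<Rightarrow> 'i \<Rightarrow> real"
  assumes EI: "E \<subseteq> I"
    and pd: "\<And>v. zoff I v \<Longrightarrow> v \<noteq> (\<lambda>_. 0) \<Longrightarrow> qf I J v > 0"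
  shows "invertible_on E J"
proof -
  define A :: "real^'i^'i" where "A = (\<chi> a b. if a \<in> E \<and> b \<in> E then J a b else if a = b then 1 else 0)"
  have Ax_out: "(A *v x) $ a = x $ a" if "a \<notin> E" for x a
  proof -
    have "(A *v x) $ a = (\<Sum>j\<in>UNIV. (if a = j then 1 else 0) * x $ j)"
      unfolding matrix_vector_mult_def A_def using that by simp
    also have "\<dots> = (\<Sum>j\<in>UNIV. if a = j then x $ j else 0)" by (rule sum.cong) auto
    also have "\<dots> = x $ a" by simp
    finally show ?thesis .
  qed
  have Ax_in: "(A *v x) $ a = (\<Sum>b\<in>E. J a b * x $ b)" if "a \<in> E" for x a
  proof -
    have "(A *v x) $ a = (\<Sum>b\<in>UNIV. (if b \<in> E then J a b * x $ b else 0))"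
      unfolding matrix_vector_mult_def A_def using that by (auto intro!: sum.cong)
    also have "\<dots> = (\<Sum>b\<in>E. J a b * x $ b)"
      by (simp add: sum.If_cases)
    finally show ?thesis .
  qed
  have ker: "x = 0" if Ax: "A *v x = 0" for x
  proof -
    define v where "v a = (if a \<in> E then x $ a else 0)" for a
    have fI: "finite I" by simp
    have "qf I J v = (\<Sum>a\<in>E. \<Sum>b\<in>E. v a * J a b * v b)"
    proof -
      have "qf I J v = (\<Sum>a\<in>I. \<Sum>b\<in>E. v a * J a b * v b)"
        unfolding qf_def
        by (intro sum.cong refl sum.mono_neutral_right) (use EI in \<open>auto simp: v_def\<close>)
      also have "\<dots> = (\<Sum>a\<in>E. \<Sum>b\<in>E. v a * J a b * v b)"
        by (intro sum.mono_neutral_right) (use EI in \<open>auto simp: v_def\<close>)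
      finally show ?thesis .
    qed
    also have "\<dots> = (\<Sum>a\<in>E. x $ a * (A *v x) $ a)"
      by (intro sum.cong refl) (simp add: Ax_in v_def sum_distrib_left mult.assoc)
    also have "\<dots> = 0" using Ax by simp
    finally have q0: "qf I J v = 0" .
    have zv: "zoff I v" using EI by (auto simp: zoff_def v_def)
    have v0: "v = (\<lambda>_. 0)" using pd[OF zv] q0 by force
    show "x = 0"
    proof (rule vec_eq_iff[THEN iffD2], rule allI)
      fix a
      show "x $ a = 0 $ a"
      proof (cases "a \<in> E")
        case True then show ?thesis using fun_cong[OF v0, of a] by (simp add: v_def)
      next
        case False then show ?thesis using Ax_out[OF False, of x] Ax by simp
      qed
    qed
  qed
  obtain B where BA: "B ** A = mat 1"
    using matrix_left_invertible_ker[of A] ker by blast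
  have AB: "A ** B = mat 1" using BA matrix_left_right_inverse by blast
  have "is_inverse_on E J (\<lambda>a b. B $ a $ b)"
    unfolding is_inverse_on_def
  proof (intro conjI ballI)
    fix a c assume a: "a \<in> E" and c: "c \<in> E"
    have "(A ** B) $ a $ c = (\<Sum>b\<in>UNIV. if b \<in> E then J a b * B $ b $ c else 0)"
      unfolding matrix_matrix_mult_def A_def using a by (auto intro!: sum.cong)
    also have "\<dots> = (\<Sum>b\<in>E. J a b * B $ b $ c)" by (simp add: sum.If_cases)
    finally show "(\<Sum>b\<in>E. J a b * B $ b $ c) = (if a = c then 1 else 0)"
      using AB by (simp add: mat_def)
  next
    fix a c assume a: "a \<in> E" and c: "c \<in> E"
    have "(B ** A) $ a $ c = (\<Sum>b\<in>UNIV. if b \<in> E then B $ a $ b * J b c else 0)"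
      unfolding matrix_matrix_mult_def A_def using c by (auto intro!: sum.cong)
    also have "\<dots> = (\<Sum>b\<in>E. B $ a $ b * J b c)" by (simp add: sum.If_cases)
    finally show "(\<Sum>b\<in>E. B $ a $ b * J b c) = (if a = c then 1 else 0)"
      using BA by (simp add: mat_def)
  qed
  then show ?thesis unfolding invertible_on_def by blast
qed


lemma qf_scale: "qf I J (\<lambda>a. r * v a) = r\<^sup>2 * qf I J v"
  unfolding qf_def by (simp add: sum_distrib_left power2_eq_square algebra_simps)

lemma Fobj_zero: "Fobj I P J c (\<lambda>_. 0) = 0"
  unfolding Fobj_def qf_def by simp

lemma exists_min:
  fixes J :: "'i::finite \<Rightarrow> 'i \<Rightarrow> real"
  assumes PI: "P \<subseteq> I"
    and pd: "\<And>v. zoff I v \<Longrightarrow> v \<noteq> (\<lambda>_. 0) \<Longrightarrow> qf I J v > 0"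
    and cnn: "\<And>a. a \<in> P \<Longrightarrow> c a \<ge> 0"
  shows "\<exists>w. zoff I w \<and> (\<forall>v. zoff I v \<longrightarrow> Fobj I P J c w \<le> Fobj I P J c v)"
proof -
  define Z where "Z = {x::real^'i. \<forall>a. a \<notin> I \<longrightarrow> x $ a = 0}"
  have Zeq: "Z = (\<Inter>a\<in>-I. {x. x $ a = 0})" unfolding Z_def by auto
  have closedZ: "closed Z" unfolding Zeq
    by (intro closed_INT ballI closed_Collect_eq continuous_intros)
  have zZ: "zoff I (($) x)" if "x \<in> Z" for x using that by (auto simp: Z_def zoff_def)
  have Z0: "0 \<in> Z" by (simp add: Z_def)
  define f where "f x = qf I J (($) x)" for x :: "real^'i"
  have contf: "continuous_on S f" for S
    unfolding f_def qf_def by (intro continuous_intros)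
  have fscale: "f (r *\<^sub>R x) = r\<^sup>2 * f x" for r x
  proof -
    have "($) (r *\<^sub>R x) = (\<lambda>a. r * x $ a)" by (rule ext) simp
    then show ?thesis unfolding f_def using qf_scale[of I J r "($) x"] by simp
  qed
  obtain \<mu> where mu: "\<mu> > 0" and mub: "\<And>x. x \<in> Z \<Longrightarrow> f x \<ge> \<mu> * (norm x)\<^sup>2"
  proof (cases "Z \<inter> sphere 0 1 = {}")
    case True
    show ?thesis
    proof (rule that[of 1])
      show "(0::real) < 1" by simp
      fix x assume xZ: "x \<in> Z"
      have "x = 0"
      proof (rule ccontr)
        assume "x \<noteq> 0"
        then have "norm ((1 / norm x) *\<^sub>R x) = 1" by simp
        moreover have "(1 / norm x) *\<^sub>R x \<in> Z" using xZ by (simp add: Z_def)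
        ultimately have "(1 / norm x) *\<^sub>R x \<in> Z \<inter> sphere 0 1" by simp
        then show False using True by auto
      qed
      then show "1 * (norm x)\<^sup>2 \<le> f x" by (simp add: f_def qf_def)
    qed
  next
    case False
    have "compact (Z \<inter> sphere 0 1)" by (intro closed_Int_compact closedZ compact_sphere)
    then obtain x0 where x0: "x0 \<in> Z \<inter> sphere 0 1" and x0m: "\<And>y. y \<in> Z \<inter> sphere 0 1 \<Longrightarrow> f x0 \<le> f y"
      using continuous_attains_inf[OF _ False contf] by blast
    have "x0 \<noteq> 0" using x0 by auto
    then have "($) x0 \<noteq> (\<lambda>_. 0)" by (auto simp: vec_eq_iff fun_eq_iff)
    then have pos: "f x0 > 0" unfolding f_def using pd zZ x0 by blast
    show ?thesis
    proof (rule that[OF pos])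
      fix x assume xZ: "x \<in> Z"
      show "f x0 * (norm x)\<^sup>2 \<le> f x"
      proof (cases "x = 0")
        case True then show ?thesis by (simp add: f_def qf_def)
      next
        case False
        then have nx: "norm x > 0" by simp
        have "norm ((1 / norm x) *\<^sub>R x) = 1" using False by simp
        moreover have "(1 / norm x) *\<^sub>R x \<in> Z" using xZ by (simp add: Z_def)
        ultimately have "(1 / norm x) *\<^sub>R x \<in> Z \<inter> sphere 0 1" by simp
        then have "f x0 \<le> f ((1 / norm x) *\<^sub>R x)" by (rule x0m)
        also have "\<dots> = f x / (norm x)\<^sup>2" by (simp add: fscale power_divide)
        finally show ?thesis using nx by (simp add: pos_le_divide_eq)
      qed
    qed
  qed
  define L where "L = (\<Sum>a\<in>I. \<bar>J a a\<bar>)"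
  define \<Phi> where "\<Phi> x = Fobj I P J c (($) x)" for x :: "real^'i"
  have contPhi: "continuous_on S \<Phi>" for S
    unfolding \<Phi>_def Fobj_def qf_def by (intro continuous_intros) auto
  have lower: "\<Phi> x \<ge> \<mu> / 2 * (norm x)\<^sup>2 - L * norm x" if xZ: "x \<in> Z" for x
  proof -
    have "(\<Sum>a\<in>I. x $ a * J a a) \<le> (\<Sum>a\<in>I. norm x * \<bar>J a a\<bar>)"
    proof (rule sum_mono)
      fix a
      have "x $ a * J a a \<le> \<bar>x $ a\<bar> * \<bar>J a a\<bar>" by (metis abs_ge_self abs_mult)
      also have "\<dots> \<le> norm x * \<bar>J a a\<bar>" by (intro mult_right_mono component_le_norm_cart) auto
      finally show "x $ a * J a a \<le> norm x * \<bar>J a a\<bar>" .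
    qed
    also have "\<dots> = L * norm x" by (simp add: L_def sum_distrib_left mult.commute)
    finally have lin: "(\<Sum>a\<in>I. x $ a * J a a) \<le> L * norm x" .
    have pen: "(\<Sum>a\<in>P. c a * \<bar>x $ a\<bar>) \<ge> 0" by (intro sum_nonneg) (simp add: cnn)
    have m: "qf I J (($) x) \<ge> \<mu> * (norm x)\<^sup>2" using mub[OF xZ] by (simp add: f_def)
    have e: "\<mu> / 2 * (norm x)\<^sup>2 = (\<mu> * (norm x)\<^sup>2) / 2" by simp
    have "\<Phi> x = qf I J (($) x) / 2 - (\<Sum>a\<in>I. x $ a * J a a) + (\<Sum>a\<in>P. c a * \<bar>x $ a\<bar>)"
      by (simp add: \<Phi>_def Fobj_def)
    then show ?thesis using lin pen m unfolding e by linarith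
  qed
  define R where "R = 2 * L / \<mu> + 1"
  have L0: "L \<ge> 0" unfolding L_def by (intro sum_nonneg) auto
  have "2 * L / \<mu> \<ge> 0" using L0 mu by simp
  then have R1: "R \<ge> 1" by (simp add: R_def)
  have cpt: "compact (Z \<inter> cball 0 R)" by (intro closed_Int_compact closedZ compact_cball)
  have Z0R: "0 \<in> Z \<inter> cball 0 R" using Z0 R1 by auto
  then have ne: "Z \<inter> cball 0 R \<noteq> {}" by blast
  obtain xs where xs: "xs \<in> Z \<inter> cball 0 R" and xsm: "\<And>y. y \<in> Z \<inter> cball 0 R \<Longrightarrow> \<Phi> xs \<le> \<Phi> y"
    using continuous_attains_inf[OF cpt ne contPhi] by blast
  have z0: "($) (0::real^'i) = (\<lambda>_. 0)" by (rule ext) simp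
  have "\<Phi> 0 = 0" unfolding \<Phi>_def z0 by (rule Fobj_zero)
  have glob: "\<Phi> xs \<le> \<Phi> x" if xZ: "x \<in> Z" for x
  proof (cases "norm x \<le> R")
    case True then show ?thesis using xZ xsm by auto
  next
    case False
    then have nx: "2 * L / \<mu> < norm x" unfolding R_def by simp
    then have "2 * L < norm x * \<mu>" using mu by (simp add: divide_less_eq)
    moreover have "\<mu> / 2 * norm x = (norm x * \<mu>) / 2" by simp
    ultimately have pos1: "\<mu> / 2 * norm x - L > 0" by linarith
    have pos2: "norm x > 0" using False R1 by linarith
    have "norm x * (\<mu> / 2 * norm x - L) > 0" using pos1 pos2 by simp
    moreover have "norm x * (\<mu> / 2 * norm x - L) = \<mu> / 2 * (norm x)\<^sup>2 - L * norm x"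
      by (simp add: algebra_simps power2_eq_square)
    ultimately have "\<Phi> x > 0" using lower[OF xZ] by linarith
    moreover have "\<Phi> xs \<le> \<Phi> 0" using xsm Z0R by blast
    ultimately show ?thesis using \<open>\<Phi> 0 = 0\<close> by simp
  qed
  show ?thesis
  proof (intro exI conjI allI impI)
    show "zoff I (($) xs)" using xs zZ by auto
    fix v assume v: "zoff I v"
    have vZ: "vec_lambda v \<in> Z" using v by (simp add: Z_def zoff_def)
    have "Fobj I P J c (($) xs) = \<Phi> xs" by (simp add: \<Phi>_def)
    also have "\<dots> \<le> \<Phi> (vec_lambda v)" by (rule glob[OF vZ])
    also have "\<dots> = Fobj I P J c v"
    proof -
      have "($) (vec_lambda v) = v" by (rule ext) simp
      then show ?thesis by (simp add: \<Phi>_def)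
    qed
    finally show "Fobj I P J c (($) xs) \<le> Fobj I P J c v" .
  qed
qed


abbreviation Pset :: "('p::{finite,linorder} \<times> 'p) set" where
  "Pset \<equiv> {(j,k). j < k}"

definition cw :: "real \<Rightarrow> nat \<Rightarrow> (nat \<Rightarrow> real^'p::{finite,linorder}) \<Rightarrow> ('p \<times> 'p) \<Rightarrow> real" where
  "cw lam n X a = lam / real n / (Smat n X a)\<^sup>2"

lemma Pset_idx: "Pset \<subseteq> idx" by (auto simp: idx_def)

lemma Jhat_sym: "Jhat n X a b = Jhat n X b a"
  unfolding Jhat_def by (auto simp: mult.commute)

lemma dhat_Fobj: "dhat lam n X w = Fobj idx Pset (Jhat n X) (cw lam n X) w"
  unfolding dhat_def Fobj_def qf_def cw_def
  by (simp add: sum_distrib_left field_simps)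

lemma vecs_zoff: "w \<in> vecs \<longleftrightarrow> zoff idx w"
  by (simp add: vecs_def zoff_def)

lemma is_minimizer_Fobj:
  "is_minimizer lam n X w \<longleftrightarrow> zoff idx w \<and> (\<forall>v. zoff idx v \<longrightarrow> Fobj idx Pset (Jhat n X) (cw lam n X) w \<le> Fobj idx Pset (Jhat n X) (cw lam n X) v)"
  unfolding is_minimizer_def dhat_Fobj Ball_def vecs_zoff by auto

lemma aux1: "(lam::real) > 0 \<Longrightarrow> (n::real) > 0 \<Longrightarrow> (lam / n / x) * n / lam = 1 / x"
  by (cases "x = 0") (simp_all add: field_simps)

lemma det_main:
  fixes X :: "nat \<Rightarrow> real^'p::{finite,linorder}"
  assumes lam: "lam \<ge> 0" and npos: "n > 0"
    and pd: "\<And>v. zoff idx v \<Longrightarrow> v \<noteq> (\<lambda>_. 0) \<Longrightarrow> qf idx (Jhat n X) v > 0"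
  shows "\<exists>w. is_minimizer lam n X w \<and>
           (\<forall>v. is_minimizer lam n X v \<longrightarrow> v = w) \<and>
           (\<exists>\<eta>. is_subgrad n X w \<eta> \<and>
              (let E = Ehat lam n X w; J = Jhat n X in
                invertible_on E J \<and>
                (\<forall>a\<in>E. w a = (\<Sum>b\<in>E. mat_inv_on E J a b * (J b b - (lam / real n) * \<eta> b))) \<and>
                (\<forall>a\<in>idx - E. w a = 0)))"
proof -
  let ?J = "Jhat n X" and ?c = "cw lam n X"
  have fin: "finite (idx :: ('p \<times> 'p) set)" by simp
  have sym: "\<And>a b. a \<in> idx \<Longrightarrow> b \<in> idx \<Longrightarrow> ?J a b = ?J b a" by (rule Jhat_sym)
  have cnn: "\<And>a. a \<in> Pset \<Longrightarrow> ?c a \<ge> 0" using lam by (simp add: cw_def)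
  obtain w where zw: "zoff idx w" and wmin: "\<And>v. zoff idx v \<Longrightarrow> Fobj idx Pset ?J ?c w \<le> Fobj idx Pset ?J ?c v"
  proof -
    have "\<exists>w. zoff idx w \<and> (\<forall>v. zoff idx v \<longrightarrow> Fobj idx Pset ?J ?c w \<le> Fobj idx Pset ?J ?c v)"
      apply (rule exists_min[OF Pset_idx])
      using pd cnn by auto
    then show ?thesis using that by blast
  qed
  have K: "kkt idx Pset ?J ?c w"
  proof (rule min_kkt[OF fin Pset_idx sym])
    fix a :: "'p \<times> 'p" and t :: real assume "a \<in> idx"
    then have "zoff idx (w(a := w a + t))" using zw by (auto simp: zoff_def)
    then show "Fobj idx Pset ?J ?c w \<le> Fobj idx Pset ?J ?c (w(a := w a + t))" by (rule wmin)
  qed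
  have wm: "is_minimizer lam n X w" unfolding is_minimizer_Fobj using zw wmin by blast
  have uniq: "v = w" if vm: "is_minimizer lam n X v" for v
  proof -
    have zv: "zoff idx v" and vle: "Fobj idx Pset ?J ?c v \<le> Fobj idx Pset ?J ?c w"
      using vm zw unfolding is_minimizer_Fobj by auto
    have "qf idx ?J (\<lambda>a. v a - w a) / 2 \<le> Fobj idx Pset ?J ?c v - Fobj idx Pset ?J ?c w"
      apply (rule kkt_lower[OF fin Pset_idx])
      using sym K cnn by auto
    then have q: "qf idx ?J (\<lambda>a. v a - w a) \<le> 0" using vle by simp
    have "zoff idx (\<lambda>a. v a - w a)" using zv zw by (simp add: zoff_def)
    then have "(\<lambda>a. v a - w a) = (\<lambda>_. 0)" using pd q by force
    then show "v = w" by (auto simp: fun_eq_iff dest: fun_cong)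
  qed
  define g where "g a = gr idx ?J w a" for a
  define S where "S = Smat n X"
  define \<eta> where "\<eta> a = (if lam = 0 then (if fst a = snd a then 0 else if w a > 0 then 1 / (S a)\<^sup>2
                 else if w a < 0 then - 1 / (S a)\<^sup>2 else 0) else g a * real n / lam)" for a
  have Kd: "g a = 0" if "a \<in> idx" "a \<notin> Pset" for a using K that unfolding kkt_def g_def by auto
  have Kp: "(w a > 0 \<longrightarrow> g a = ?c a) \<and> (w a < 0 \<longrightarrow> g a = - ?c a) \<and> (w a = 0 \<longrightarrow> \<bar>g a\<bar> \<le> ?c a)"
    if "a \<in> Pset" for a using K that Pset_idx unfolding kkt_def g_def by blast
  have cS: "?c a = lam / real n / (S a)\<^sup>2" for a by (simp add: cw_def S_def)
  have geta: "g a = (lam / real n) * \<eta> a" if aI: "a \<in> idx" for a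
  proof (cases "lam = 0")
    case True
    then have "?c a = 0" by (simp add: cw_def)
    then have c0: "?c a = 0" .
    have "g a = 0"
    proof (cases "a \<in> Pset")
      case True
      note KK = Kp[OF True]
      consider "w a > 0" | "w a < 0" | "w a = 0" by linarith
      then show ?thesis using KK c0 by cases auto
    next
      case False then show ?thesis using Kd[OF aI] by simp
    qed
    then show ?thesis using True by simp
  next
    case False
    then show ?thesis using npos by (simp add: \<eta>_def)
  qed
  have sg: "is_subgrad n X w \<eta>"
    unfolding is_subgrad_def
  proof (intro allI impI)
    fix j k :: 'p assume jk: "j \<le> k"
    show "if j = k then \<eta> (j, k) = 0
         else if w (j, k) > 0 then \<eta> (j, k) = 1 / (Smat n X (j, k))\<^sup>2
         else if w (j, k) < 0 then \<eta> (j, k) = - 1 / (Smat n X (j, k))\<^sup>2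
         else (\<exists>t. -1 \<le> t \<and> t \<le> 1 \<and> \<eta> (j, k) = t / (Smat n X (j, k))\<^sup>2)"
    proof (cases "lam = 0")
      case True
      show ?thesis using True unfolding \<eta>_def S_def by (auto intro: exI[of _ 0])
    next
      case False
      then have lp: "lam > 0" using lam by simp
      have aI: "(j, k) \<in> idx" using jk by (simp add: idx_def)
      show ?thesis
      proof (cases "j = k")
        case True
        then have "(j,k) \<notin> Pset" by simp
        then have "g (j,k) = 0" using Kd[OF aI] by simp
        then show ?thesis using True False by (simp add: \<eta>_def)
      next
        case jne: False
        then have aP: "(j,k) \<in> Pset" using jk by simp
        note KK = Kp[OF aP]
        have eta_eq: "\<eta> (j,k) = g (j,k) * real n / lam" using False by (simp add: \<eta>_def)
        consider "w (j,k) > 0" | "w (j,k) < 0" | "w (j,k) = 0" by linarith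
        then show ?thesis
        proof cases
          case 1
          have gv: "g (j,k) = lam / real n / (S (j,k))\<^sup>2" using 1 KK cS by simp
          have "\<eta> (j,k) = (lam / real n / (S (j,k))\<^sup>2) * real n / lam" by (simp only: eta_eq gv)
          also have "\<dots> = 1 / (S (j,k))\<^sup>2" by (rule aux1[OF lp]) (use npos in simp)
          finally show ?thesis using 1 jne unfolding S_def by simp
        next
          case 2
          have gv: "g (j,k) = - (lam / real n / (S (j,k))\<^sup>2)" using 2 KK cS by simp
          have "\<eta> (j,k) = - ((lam / real n / (S (j,k))\<^sup>2) * real n / lam)" by (simp add: eta_eq gv)
          also have "\<dots> = - (1 / (S (j,k))\<^sup>2)" using aux1[OF lp, of "real n" "(S (j,k))\<^sup>2"] npos by simp
          finally show ?thesis using 2 jne unfolding S_def by simp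
        next
          case 3
          then have gb: "\<bar>g (j,k)\<bar> \<le> lam / real n / (S (j,k))\<^sup>2" using KK cS by simp
          have "real n > 0" using npos by simp
          show ?thesis
          proof (cases "S (j,k) = 0")
            case True
            then have "g (j,k) = 0" using gb by simp
            then show ?thesis using 3 jne eta_eq True unfolding S_def by (auto intro: exI[of _ 0])
          next
            case Sne: False
            define t where "t = \<eta> (j,k) * (S (j,k))\<^sup>2"
            have S2: "(S (j,k))\<^sup>2 > 0" using Sne by simp
            have "\<bar>t\<bar> = \<bar>g (j,k)\<bar> * real n / lam * (S (j,k))\<^sup>2"
              unfolding t_def eta_eq using lp S2 \<open>real n > 0\<close> by (simp add: abs_mult)
            also have "\<dots> \<le> (lam / real n / (S (j,k))\<^sup>2) * real n / lam * (S (j,k))\<^sup>2"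
              using gb lp S2 \<open>real n > 0\<close> by (intro mult_right_mono divide_right_mono mult_right_mono) auto
            also have "\<dots> = 1" using lp S2 \<open>real n > 0\<close> by (simp add: field_simps)
            finally have tb: "\<bar>t\<bar> \<le> 1" .
            have "\<eta> (j,k) = t / (S (j,k))\<^sup>2" using S2 by (simp add: t_def)
            then show ?thesis using 3 jne tb unfolding S_def by (auto intro!: exI[of _ t])
          qed
        qed
      qed
    qed
  qed
  define E where "E = Ehat lam n X w"
  have EI: "E \<subseteq> idx" by (auto simp: E_def Ehat_def)
  have thr: "lam / (real n * (Smat n X a)\<^sup>2) * (if fst a \<noteq> snd a then 1 else 0) = (if a \<in> Pset then ?c a else 0)"
    if "a \<in> idx" for a
    using that by (cases a) (auto simp: idx_def cw_def)
  have Emem: "a \<in> E \<longleftrightarrow> a \<in> idx \<and> \<bar>g a\<bar> \<ge> (if a \<in> Pset then ?c a else 0)" for a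
  proof -
    have "a \<in> E \<longleftrightarrow> a \<in> idx \<and> \<bar>g a\<bar> \<ge> lam / (real n * (Smat n X a)\<^sup>2) * (if fst a \<noteq> snd a then 1 else 0)"
      by (simp add: E_def Ehat_def g_def gr_def)
    note e = this
    show ?thesis
    proof (cases "a \<in> idx")
      case True then show ?thesis using e thr[OF True] by simp
    next
      case False then show ?thesis using e by simp
    qed
  qed
  have out: "w a = 0" if "a \<in> idx - E" for a
  proof (rule ccontr)
    assume wa: "w a \<noteq> 0"
    have aI: "a \<in> idx" and aE: "a \<notin> E" using that by auto
    have lt: "\<bar>g a\<bar> < (if a \<in> Pset then ?c a else 0)" using aI aE Emem[of a] by (meson not_le)
    show False
    proof (cases "a \<in> Pset")
      case True
      note KK = Kp[OF True]
      have "?c a \<ge> 0" using cnn[OF True] .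
      then have "\<bar>g a\<bar> = ?c a" using KK wa by (cases "w a > 0") auto
      then show False using lt True by simp
    next
      case False then show False using lt by simp
    qed
  qed
  have inv: "invertible_on E ?J"
    apply (rule pd_invertible[OF EI])
    using pd by auto
  define B where "B = mat_inv_on E ?J"
  have isinv: "is_inverse_on E ?J B"
    using inv unfolding B_def mat_inv_on_def invertible_on_def by (rule someI_ex)
  have rowE: "?J a a - (lam / real n) * \<eta> a = (\<Sum>c\<in>E. ?J a c * w c)" if aI: "a \<in> idx" for a
  proof -
    have "?J a a - (lam / real n) * \<eta> a = ?J a a - g a" using geta[OF aI] by simp
    also have "\<dots> = (\<Sum>c\<in>idx. ?J a c * w c)" by (simp add: g_def gr_def)
    also have "\<dots> = (\<Sum>c\<in>E. ?J a c * w c)"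
      by (rule sum.mono_neutral_right) (use EI out in auto)
    finally show ?thesis .
  qed
  have formula: "w a = (\<Sum>b\<in>E. B a b * (?J b b - (lam / real n) * \<eta> b))" if aE: "a \<in> E" for a
  proof -
    have "(\<Sum>b\<in>E. B a b * (?J b b - (lam / real n) * \<eta> b)) = (\<Sum>b\<in>E. B a b * (\<Sum>c\<in>E. ?J b c * w c))"
    proof (intro sum.cong refl)
      fix b assume "b \<in> E"
      then have bI: "b \<in> idx" using EI by auto
      show "B a b * (?J b b - (lam / real n) * \<eta> b) = B a b * (\<Sum>c\<in>E. ?J b c * w c)"
        by (subst rowE[OF bI]) (rule refl)
    qed
    also have "\<dots> = (\<Sum>b\<in>E. \<Sum>c\<in>E. B a b * ?J b c * w c)"
      by (simp add: sum_distrib_left mult.assoc)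
    also have "\<dots> = (\<Sum>c\<in>E. \<Sum>b\<in>E. B a b * ?J b c * w c)" by (rule sum.swap)
    also have "\<dots> = (\<Sum>c\<in>E. (\<Sum>b\<in>E. B a b * ?J b c) * w c)"
      by (simp add: sum_distrib_right)
    also have "\<dots> = (\<Sum>c\<in>E. (if a = c then 1 else 0) * w c)"
      using isinv aE unfolding is_inverse_on_def by (intro sum.cong refl) auto
    also have "\<dots> = (\<Sum>c\<in>E. if a = c then w c else 0)" by (intro sum.cong refl) auto
    also have "\<dots> = w a" using aE EI by (simp add: finite_subset)
    finally show ?thesis by simp
  qed
  show ?thesis
    unfolding Let_def
    apply (rule exI[of _ w])
    apply (intro conjI allI impI)
      apply (rule wm)
     apply (erule uniq)
    apply (rule exI[of _ \<eta>])
    using sg inv formula out unfolding E_def B_def by auto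
qed


lemma deriv_const_real: "deriv (\<lambda>t. C) (s::real) = (0::real)"
  by (rule DERIV_imp_deriv) (rule DERIV_const)

lemma d_off:
  fixes A B x y s :: real
  assumes D: "A - s\<^sup>2 > 0"
  shows "((\<lambda>t. - ln (A - t\<^sup>2) - (B - 2 * t * x * y) / (A - t\<^sup>2)) has_real_derivative
     2 * s / (A - s\<^sup>2) + (2 * x * y * (A - s\<^sup>2) - 2 * s * (B - 2 * s * x * y)) / (A - s\<^sup>2)\<^sup>2) (at s)"
proof -
  define u where "u = A - s\<^sup>2"
  have u: "u > 0" using D by (simp add: u_def)
  have A: "A = u + s\<^sup>2" by (simp add: u_def)
  have "((\<lambda>t. - ln (u + s\<^sup>2 - t\<^sup>2) - (B - 2 * t * x * y) / (u + s\<^sup>2 - t\<^sup>2)) has_real_derivative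
     2 * s / u + (2 * x * y * u - 2 * s * (B - 2 * s * x * y)) / u\<^sup>2) (at s)"
    using u
    apply -
    apply (rule derivative_eq_intros refl | simp)+
    apply (simp add: field_simps power2_eq_square)
    done
  then show ?thesis unfolding A by simp
qed

lemma d_diag:
  fixes x s :: real
  assumes D: "s > 0"
  shows "((\<lambda>t. - ln t - x / t) has_real_derivative (x - s) / s\<^sup>2) (at s)"
  using D
  apply -
  apply (rule derivative_eq_intros refl | simp)+
  apply (simp add: field_simps power2_eq_square)
  done

lemma Umat_zero:
  assumes c: "c \<in> idx" and "(fst a, fst a) \<noteq> c" "(snd a, snd a) \<noteq> c" "a \<noteq> c"
  shows "Umat \<theta> x c a = 0"
proof -
  obtain j k where a: "a = (j,k)" by (cases a)
  have "(\<lambda>t. ell j k (\<theta>(c := t)) x) = (\<lambda>t. ell j k \<theta> x)"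
    using assms a by (auto simp: ell_def fun_eq_iff)
  then show ?thesis by (simp add: Umat_def score_def c a deriv_const_real)
qed

lemma Umat_diag:
  assumes "\<theta> (j,j) > 0"
  shows "Umat \<theta> x (j,j) (j,j) = ((x$j)\<^sup>2 - \<theta> (j,j)) / (\<theta> (j,j))\<^sup>2"
proof -
  have c: "(j,j) \<in> idx" by (simp add: idx_def)
  have "(\<lambda>t. ell j j (\<theta>((j,j) := t)) x) = (\<lambda>t. - ln t - (x$j)\<^sup>2 / t)"
    by (simp add: ell_def fun_eq_iff)
  then show ?thesis
    using DERIV_imp_deriv[OF d_diag[OF assms, of "(x$j)\<^sup>2"]] by (simp add: Umat_def score_def c)
qed

lemma Umat_off:
  assumes jk: "j < k" and D: "\<theta> (j,j) * \<theta> (k,k) - (\<theta> (j,k))\<^sup>2 > 0"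
  shows "Umat \<theta> x (j,k) (j,k) =
    (let s = \<theta> (j,k); DD = \<theta> (j,j) * \<theta> (k,k) - (\<theta> (j,k))\<^sup>2;
         B = \<theta> (k,k) * (x$j)\<^sup>2 + \<theta> (j,j) * (x$k)\<^sup>2 in
     2 * s / DD + (2 * (x$j) * (x$k) * DD - 2 * s * (B - 2 * s * (x$j) * (x$k))) / DD\<^sup>2)"
proof -
  have c: "(j,k) \<in> idx" using jk by (simp add: idx_def)
  have ne: "j \<noteq> k" using jk by simp
  define A where "A = \<theta> (j,j) * \<theta> (k,k)"
  define B where "B = \<theta> (k,k) * (x$j)\<^sup>2 + \<theta> (j,j) * (x$k)\<^sup>2"
  have "(\<lambda>t. ell j k (\<theta>((j,k) := t)) x) = (\<lambda>t. - ln (A - t\<^sup>2) - (B - 2 * t * (x$j) * (x$k)) / (A - t\<^sup>2))"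
    using ne by (simp add: ell_def fun_eq_iff A_def B_def algebra_simps)
  moreover have "A - (\<theta> (j,k))\<^sup>2 > 0" using D by (simp add: A_def)
  ultimately show ?thesis
    using DERIV_imp_deriv[OF d_off[of A "\<theta> (j,k)" B "x$j" "x$k"]]
    by (simp add: Umat_def score_def c Let_def A_def B_def)
qed


definition DS :: "('p \<times> 'p \<Rightarrow> real) \<Rightarrow> 'p \<Rightarrow> 'p \<Rightarrow> real" where
  "DS \<theta> j k = \<theta> (j,j) * \<theta> (k,k) - (\<theta> (j,k))\<^sup>2"

definition QS :: "('p \<times> 'p \<Rightarrow> real) \<Rightarrow> real^'p \<Rightarrow> 'p \<Rightarrow> 'p \<Rightarrow> real" where
  "QS \<theta> x j k = \<theta> (j,k) * DS \<theta> j k + (x$j) * (x$k) * DS \<theta> j k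
     - \<theta> (j,k) * (\<theta> (k,k) * (x$j)\<^sup>2 + \<theta> (j,j) * (x$k)\<^sup>2 - 2 * \<theta> (j,k) * (x$j) * (x$k))"

definition goodS :: "nat \<Rightarrow> (nat \<Rightarrow> real^'p::{finite,linorder}) \<Rightarrow> bool" where
  "goodS n x \<longleftrightarrow> (\<forall>j. Smat n x (j,j) > 0) \<and> (\<forall>j. (x 0 $ j)\<^sup>2 \<noteq> Smat n x (j,j)) \<and>
     (\<forall>j k. j < k \<longrightarrow> DS (Smat n x) j k \<noteq> 0 \<and> QS (Smat n x) (x 0) j k \<noteq> 0)"

lemma Smat_in: "a \<in> idx \<Longrightarrow> Smat n x a = (1 / real n) * (\<Sum>i<n. (x i)$(fst a) * (x i)$(snd a))"
  by (simp add: Smat_def)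

lemma DS_nonneg:
  fixes x :: "nat \<Rightarrow> real^'p::{finite,linorder}"
  assumes "j < k"
  shows "DS (Smat n x) j k \<ge> 0"
proof -
  have i: "(j,j) \<in> idx" "(k,k) \<in> idx" "(j,k) \<in> idx" using assms by (auto simp: idx_def)
  have cs: "(\<Sum>i<n. (x i)$j * (x i)$k)\<^sup>2 \<le> (\<Sum>i<n. ((x i)$j)\<^sup>2) * (\<Sum>i<n. ((x i)$k)\<^sup>2)"
    by (rule Cauchy_Schwarz_ineq_sum)
  have "(Smat n x (j,k))\<^sup>2 = (\<Sum>i<n. (x i)$j * (x i)$k)\<^sup>2 / (real n)\<^sup>2"
    using i by (simp add: Smat_in power_divide)
  also have "\<dots> \<le> ((\<Sum>i<n. ((x i)$j)\<^sup>2) * (\<Sum>i<n. ((x i)$k)\<^sup>2)) / (real n)\<^sup>2"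
    by (intro divide_right_mono cs) simp
  also have "\<dots> = Smat n x (j,j) * Smat n x (k,k)"
    using i by (simp add: Smat_in power2_eq_square)
  finally show ?thesis by (simp add: DS_def)
qed

lemma U0_diag_nz:
  assumes g: "goodS n x"
  shows "Umat (Smat n x) (x 0) (j,j) (j,j) \<noteq> 0"
proof -
  have p: "Smat n x (j,j) > 0" and q: "(x 0 $ j)\<^sup>2 \<noteq> Smat n x (j,j)" using g by (auto simp: goodS_def)
  have e: "Umat (Smat n x) (x 0) (j,j) (j,j) = ((x 0 $ j)\<^sup>2 - Smat n x (j,j)) / (Smat n x (j,j))\<^sup>2"
    by (rule Umat_diag) (rule p)
  show ?thesis using q p by (simp add: e)
qed

lemma alg_off:
  fixes s DD x y B :: real
  assumes "DD \<noteq> 0"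
  shows "2 * s / DD + (2 * x * y * DD - 2 * s * (B - 2 * s * x * y)) / DD\<^sup>2 = 2 * (s * DD + x * y * DD - s * (B - 2 * s * x * y)) / DD\<^sup>2"
  using assms by (simp add: field_simps power2_eq_square)

lemma U0_off_nz:
  assumes g: "goodS n x" and jk: "j < k"
  shows "Umat (Smat n x) (x 0) (j,k) (j,k) \<noteq> 0"
proof -
  have D0: "DS (Smat n x) j k \<noteq> 0" and Q0: "QS (Smat n x) (x 0) j k \<noteq> 0" using g jk by (auto simp: goodS_def)
  have Dp: "DS (Smat n x) j k > 0" using D0 DS_nonneg[OF jk, of n x] by simp
  define DD where "DD = DS (Smat n x) j k"
  have "Umat (Smat n x) (x 0) (j,k) (j,k) = 2 * QS (Smat n x) (x 0) j k / DD\<^sup>2"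
    using Dp unfolding Umat_off[OF jk Dp[unfolded DS_def]] Let_def
    by (subst alg_off) (simp_all add: QS_def DS_def DD_def)
  then show ?thesis using Q0 Dp by (simp add: DD_def)
qed

lemma qf_cong: "(\<And>a b. a \<in> I \<Longrightarrow> b \<in> I \<Longrightarrow> J a b = J' a b) \<Longrightarrow> qf I J v = qf I J' v"
  unfolding qf_def by (intro sum.cong refl) auto

lemma qf_sum: "qf I (\<lambda>a b. \<Sum>k\<in>K. M k a b) v = (\<Sum>k\<in>K. qf I (M k) v)"
proof -
  have "qf I (\<lambda>a b. \<Sum>k\<in>K. M k a b) v = (\<Sum>a\<in>I. \<Sum>b\<in>I. \<Sum>k\<in>K. v a * M k a b * v b)"
    unfolding qf_def by (simp add: sum_distrib_left sum_distrib_right)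
  also have "\<dots> = (\<Sum>a\<in>I. \<Sum>k\<in>K. \<Sum>b\<in>I. v a * M k a b * v b)"
    by (intro sum.cong refl) (rule sum.swap)
  also have "\<dots> = (\<Sum>k\<in>K. \<Sum>a\<in>I. \<Sum>b\<in>I. v a * M k a b * v b)" by (rule sum.swap)
  finally show ?thesis by (simp add: qf_def)
qed

lemma qf_scal: "qf I (\<lambda>a b. r * M a b) v = r * qf I M v"
  unfolding qf_def by (simp add: sum_distrib_left algebra_simps)

lemma qf_rank1: "qf I (\<lambda>a b. u a * u b) v = (\<Sum>a\<in>I. u a * v a)\<^sup>2"
  unfolding qf_def power2_eq_square sum_product by (intro sum.cong refl) (simp add: algebra_simps)

lemma qf_Jhat:
  "qf idx (Jhat n x) v = (1 / real n) * (\<Sum>i<n. \<Sum>c\<in>idx. (\<Sum>a\<in>idx. Umat (Smat n x) (x i) c a * v a)\<^sup>2)"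
proof -
  have "qf idx (Jhat n x) v = qf idx (\<lambda>a b. (1 / real n) * (\<Sum>i<n. \<Sum>c\<in>idx. Umat (Smat n x) (x i) c a * Umat (Smat n x) (x i) c b)) v"
    by (rule qf_cong) (simp add: Jhat_def)
  also have "\<dots> = (1 / real n) * (\<Sum>i<n. \<Sum>c\<in>idx. qf idx (\<lambda>a b. Umat (Smat n x) (x i) c a * Umat (Smat n x) (x i) c b) v)"
    unfolding qf_scal qf_sum by (rule refl)
  also have "\<dots> = (1 / real n) * (\<Sum>i<n. \<Sum>c\<in>idx. (\<Sum>a\<in>idx. Umat (Smat n x) (x i) c a * v a)\<^sup>2)"
    by (simp add: qf_rank1)
  finally show ?thesis .
qed

lemma good_pd:
  fixes x :: "nat \<Rightarrow> real^'p::{finite,linorder}"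
  assumes n: "n > 0" and g: "goodS n x" and zv: "zoff idx v" and vnz: "v \<noteq> (\<lambda>_. 0)"
  shows "qf idx (Jhat n x) v > 0"
proof (rule ccontr)
  assume "\<not> qf idx (Jhat n x) v > 0"
  then have le: "qf idx (Jhat n x) v \<le> 0" by simp
  define U where "U = Umat (Smat n x) (x 0)"
  define r where "r c = (\<Sum>a\<in>idx. U c a * v a)" for c
  have "(\<Sum>c\<in>idx. (r c)\<^sup>2) \<le> (\<Sum>i<n. \<Sum>c\<in>idx. (\<Sum>a\<in>idx. Umat (Smat n x) (x i) c a * v a)\<^sup>2)"
    unfolding r_def U_def
    using member_le_sum[of 0 "{..<n}" "\<lambda>i. \<Sum>c\<in>idx. (\<Sum>a\<in>idx. Umat (Smat n x) (x i) c a * v a)\<^sup>2"] n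
    by (simp add: sum_nonneg)
  also have "\<dots> \<le> 0" using le n unfolding qf_Jhat by (simp add: divide_le_0_iff)
  finally have "(\<Sum>c\<in>idx. (r c)\<^sup>2) \<le> 0" .
  then have r0: "r c = 0" if "c \<in> idx" for c
    using sum_nonneg_eq_0_iff[of idx "\<lambda>c. (r c)\<^sup>2"] that
    by (metis (no_types, lifting) antisym finite zero_le_power2 sum_nonneg power_zero_numeral zero_eq_power2)
  have off: "v (j,k) = 0" if jk: "j < k" for j k
  proof -
    have cI: "(j,k) \<in> idx" using jk by (simp add: idx_def)
    have "r (j,k) = (\<Sum>a\<in>idx. if a = (j,k) then U (j,k) (j,k) * v (j,k) else 0)"
      unfolding r_def
    proof (intro sum.cong refl)
      fix a :: "'p \<times> 'p" assume aI: "a \<in> idx"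
      show "U (j,k) a * v a = (if a = (j,k) then U (j,k) (j,k) * v (j,k) else 0)"
      proof (cases "a = (j,k)")
        case False
        have "(fst a, fst a) \<noteq> (j,k)" "(snd a, snd a) \<noteq> (j,k)" using jk by auto
        then have "U (j,k) a = 0" unfolding U_def using Umat_zero[OF cI] False by blast
        then show ?thesis using False by simp
      qed simp
    qed
    also have "\<dots> = U (j,k) (j,k) * v (j,k)" using cI by simp
    finally have "U (j,k) (j,k) * v (j,k) = 0" using r0[OF cI] by simp
    moreover have "U (j,k) (j,k) \<noteq> 0" unfolding U_def by (rule U0_off_nz[OF g jk])
    ultimately show ?thesis by simp
  qed
  have dg: "v (j,j) = 0" for j
  proof -
    have cI: "(j,j) \<in> idx" by (simp add: idx_def)
    have "r (j,j) = (\<Sum>a\<in>idx. if a = (j,j) then U (j,j) (j,j) * v (j,j) else 0)"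
      unfolding r_def
    proof (intro sum.cong refl)
      fix a :: "'p \<times> 'p" assume aI: "a \<in> idx"
      show "U (j,j) a * v a = (if a = (j,j) then U (j,j) (j,j) * v (j,j) else 0)"
      proof (cases "a = (j,j)")
        case False
        show ?thesis
        proof (cases "fst a = snd a")
          case True
          then have "(fst a, fst a) \<noteq> (j,j)" "(snd a, snd a) \<noteq> (j,j)" using False by (cases a, auto)+
          then have "U (j,j) a = 0" unfolding U_def using Umat_zero[OF cI] False by blast
          then show ?thesis using False by simp
        next
          case ne: False
          obtain p q where a: "a = (p,q)" by (cases a)
          have "p < q" using aI ne a by (auto simp: idx_def)
          then have "v a = 0" using off a by simp
          then show ?thesis using False by simp
        qed
      qed simp
    qed
    also have "\<dots> = U (j,j) (j,j) * v (j,j)" using cI by simp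
    finally have "U (j,j) (j,j) * v (j,j) = 0" using r0[OF cI] by simp
    moreover have "U (j,j) (j,j) \<noteq> 0" unfolding U_def by (rule U0_diag_nz[OF g])
    ultimately show ?thesis by simp
  qed
  have "v = (\<lambda>_. 0)"
  proof (rule ext)
    fix a :: "'p \<times> 'p"
    obtain p q where a: "a = (p,q)" by (cases a)
    show "v a = 0"
    proof (cases "a \<in> idx")
      case False then show ?thesis using zv unfolding zoff_def by blast
    next
      case True
      then have "p \<le> q" using a by (simp add: idx_def)
      then show ?thesis using a off dg by (cases "p = q") auto
    qed
  qed
  then show False using vnz by simp
qed


lemma transl_negligible:
  fixes S :: "(real^'n) set" and e :: "real^'n"
  assumes Sm: "S \<in> sets lebesgue" and e0: "\<And>i. e$i \<ge> 0"
    and fin: "\<And>z. finite {t. z + t *\<^sub>R e \<in> S}" and cardb: "\<And>z. card {t. z + t *\<^sub>R e \<in> S} \<le> N"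
  shows "negligible S"
proof -
  have "negligible (S \<inter> cbox a b)" for a b
  proof -
    define T where "T = S \<inter> cbox a b"
    have Tm: "T \<in> lmeasurable" unfolding T_def
      by (intro bounded_set_imp_lmeasurable bounded_Int sets.Int Sm) (auto intro: lmeasurable_cbox)
    define C where "C = cbox a (b + e)"
    have Cm: "C \<in> lmeasurable" unfolding C_def by (rule lmeasurable_cbox)
    have TC: "T \<subseteq> cbox a b" by (simp add: T_def)
    have bound: "real K * measure lebesgue T \<le> real N * measure lebesgue C" if K: "K > 0" for K :: nat
    proof -
      define Ti where "Ti i = (+) ((real i / real K) *\<^sub>R e) ` T" for i :: nat
      have Tim: "Ti i \<in> lmeasurable" for i unfolding Ti_def by (rule measurable_translation[OF Tm])
      have Tmeas: "measure lebesgue (Ti i) = measure lebesgue T" for i unfolding Ti_def by (rule measure_translation)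
      have hi: "(indicat_real (Ti i) has_integral measure lebesgue T) UNIV" for i
        using Tim[of i] Tmeas[of i] lmeasurable_iff_has_integral by metis
      have hs: "((\<lambda>z. \<Sum>i<K. indicat_real (Ti i) z) has_integral (\<Sum>i<K. measure lebesgue T)) UNIV"
        by (intro has_integral_sum) (auto intro: hi)
      have hC: "((\<lambda>z. real N * indicat_real C z) has_integral (real N * measure lebesgue C)) UNIV"
        using Cm lmeasurable_iff_has_integral has_integral_mult_right by blast
      have pw: "(\<Sum>i<K. indicat_real (Ti i) z) \<le> real N * indicat_real C z" for z
      proof -
        define Iz where "Iz = {i\<in>{..<K}. z \<in> Ti i}"
        have s: "(\<Sum>i<K. indicat_real (Ti i) z) = (\<Sum>i\<in>Iz. 1)"
        proof -
          have e: "{..<K} \<inter> {i. z \<in> Ti i} = Iz" by (auto simp: Iz_def)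
          show ?thesis unfolding indicator_def by (simp add: sum.If_cases e)
        qed
        have inC: "z \<in> C" if "i \<in> Iz" for i
        proof -
          from that obtain y where y: "y \<in> T" and z: "z = (real i / real K) *\<^sub>R e + y" and iK: "i < K"
            by (auto simp: Iz_def Ti_def)
          have r0: "0 \<le> real i / real K" and r1: "real i / real K \<le> 1" using iK by auto
          have yb: "y \<in> cbox a b" using y TC by auto
          show ?thesis unfolding C_def mem_box_cart
          proof
            fix q
            have "0 \<le> (real i / real K) * e$q" using r0 e0 by simp
            moreover have "(real i / real K) * e$q \<le> e$q" using r1 e0[of q] mult_right_mono[OF r1 e0[of q]] by simp
            moreover have "a$q \<le> y$q" "y$q \<le> b$q" using yb unfolding mem_box_cart by auto
            moreover have "z$q = (real i / real K) * e$q + y$q" unfolding z by simp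
            ultimately show "a$q \<le> z$q \<and> z$q \<le> (b + e)$q" by simp
          qed
        qed
        have cardI: "card Iz \<le> N"
        proof -
          define f where "f i = - (real i / real K)" for i :: nat
          have "inj_on f Iz" using K by (auto simp: f_def inj_on_def)
          moreover have "f ` Iz \<subseteq> {t. z + t *\<^sub>R e \<in> S}"
          proof
            fix t assume "t \<in> f ` Iz"
            then obtain i where i: "i \<in> Iz" and t: "t = f i" by auto
            from i obtain y where y: "y \<in> T" and z: "z = (real i / real K) *\<^sub>R e + y"
              by (auto simp: Iz_def Ti_def)
            have "z + t *\<^sub>R e = y" using z t by (simp add: f_def algebra_simps)
            then show "t \<in> {t. z + t *\<^sub>R e \<in> S}" using y by (simp add: T_def)
          qed
          ultimately have "card Iz \<le> card {t. z + t *\<^sub>R e \<in> S}"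
            using card_inj_on_le fin by blast
          then show ?thesis using cardb[of z] by simp
        qed
        show ?thesis
        proof (cases "Iz = {}")
          case True then show ?thesis using s by simp
        next
          case False
          then obtain i where "i \<in> Iz" by blast
          then have "z \<in> C" by (rule inC)
          then show ?thesis using s cardI by simp
        qed
      qed
      have "(\<Sum>i<K. measure lebesgue T) \<le> real N * measure lebesgue C"
        using has_integral_le[OF hs hC] pw by blast
      then show ?thesis by simp
    qed
    have m0: "measure lebesgue T \<ge> 0" by simp
    have "measure lebesgue T = 0"
    proof (rule ccontr)
      assume "measure lebesgue T \<noteq> 0"
      then have mp: "measure lebesgue T > 0" using measure_nonneg[of lebesgue T] by linarith
      obtain K :: nat where K: "real N * measure lebesgue C / measure lebesgue T < real K"
        using reals_Archimedean2 by blast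
      have "real N * measure lebesgue C / measure lebesgue T \<ge> 0"
        using mp by (intro divide_nonneg_pos mult_nonneg_nonneg) auto
      then have "real K > 0" using K by linarith
      then have Kp: "K > 0" by simp
      have "real N * measure lebesgue C < real K * measure lebesgue T"
        using K mp by (simp add: divide_less_eq)
      then show False using bound[OF Kp] by simp
    qed
    then show ?thesis unfolding T_def[symmetric] using negligible_iff_measure0[OF Tm] by simp
  qed
  then show ?thesis by (subst negligible_on_intervals) auto
qed


lemma vec_nth_meas[measurable]: "(\<lambda>x::real^'n. x $ j) \<in> borel_measurable borel"
  by (intro borel_measurable_continuous_onI continuous_intros)

lemma borel_imp_lebesgue: "A \<in> sets borel \<Longrightarrow> A \<in> sets lebesgue"
  by (metis sets_lborel sets_completionI_sets)

lemma poly_line_negligible: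
  fixes p :: "real^'n \<Rightarrow> real poly" and j :: 'n and S :: "(real^'n) set"
  assumes Sm: "S \<in> sets lebesgue"
    and inS: "\<And>z. z \<in> S \<Longrightarrow> poly (p z) (z$j) = 0"
    and inv: "\<And>z t. p (z + t *\<^sub>R axis j 1) = p z"
    and nz: "\<And>z. p z \<noteq> 0" and deg: "\<And>z. degree (p z) \<le> N"
  shows "negligible S"
proof (rule transl_negligible[OF Sm])
  show "\<And>i. 0 \<le> axis j (1::real) $ i" by (simp add: axis_def)
  fix z :: "real^'n"
  have sub: "{t. z + t *\<^sub>R axis j 1 \<in> S} \<subseteq> (\<lambda>u. u - z$j) ` {u. poly (p z) u = 0}"
  proof
    fix t assume "t \<in> {t. z + t *\<^sub>R axis j 1 \<in> S}"
    then have "z + t *\<^sub>R axis j 1 \<in> S" by simp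
    then have h: "poly (p (z + t *\<^sub>R axis j 1)) ((z + t *\<^sub>R axis j 1)$j) = 0" by (rule inS)
    have e: "(z + t *\<^sub>R axis j 1)$j = z$j + t" by (simp add: axis_def)
    have "poly (p z) (z$j + t) = 0" using h unfolding e inv .
    then show "t \<in> (\<lambda>u. u - z$j) ` {u. poly (p z) u = 0}"
      by (intro image_eqI[of _ _ "z$j + t"]) auto
  qed
  have fr: "finite {u. poly (p z) u = 0}" by (rule poly_roots_finite[OF nz])
  then show "finite {t. z + t *\<^sub>R axis j 1 \<in> S}" using sub finite_subset by blast
  have "card {t. z + t *\<^sub>R axis j 1 \<in> S} \<le> card ((\<lambda>u. u - z$j) ` {u. poly (p z) u = 0})"
    using sub fr by (intro card_mono) auto
  also have "\<dots> \<le> card {u. poly (p z) u = 0}" by (rule card_image_le[OF fr])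
  also have "\<dots> \<le> degree (p z)" by (rule card_poly_roots_bound[OF nz])
  also have "\<dots> \<le> N" by (rule deg)
  finally show "card {t. z + t *\<^sub>R axis j 1 \<in> S} \<le> N" .
qed

definition dval :: "('p \<Rightarrow> 'p \<Rightarrow> real) \<Rightarrow> real^'p \<Rightarrow> 'p \<Rightarrow> 'p \<Rightarrow> real" where
  "dval \<alpha> z j k = \<alpha> k k * (z$j)\<^sup>2 - 2 * \<alpha> j k * z$k * z$j + \<alpha> j j * (z$k)\<^sup>2 + \<alpha> j j * \<alpha> k k - (\<alpha> j k)\<^sup>2"

definition qval :: "real \<Rightarrow> ('p \<Rightarrow> 'p \<Rightarrow> real) \<Rightarrow> real^'p \<Rightarrow> 'p \<Rightarrow> 'p \<Rightarrow> real" where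
  "qval nn \<alpha> z j k = (\<alpha> j k * (\<alpha> j j * (z$k)\<^sup>2 + \<alpha> j j * \<alpha> k k - (\<alpha> j k)\<^sup>2) - nn * \<alpha> j j * \<alpha> j k * (z$k)\<^sup>2)
     + (z$k * (\<alpha> j j * (z$k)\<^sup>2 + \<alpha> j j * \<alpha> k k - (\<alpha> j k)\<^sup>2) - 2 * (\<alpha> j k)\<^sup>2 * z$k + nn * \<alpha> j j * \<alpha> k k * z$k + nn * (\<alpha> j k)\<^sup>2 * z$k) * z$j
     + (- 2 * \<alpha> j k * (z$k)\<^sup>2 + \<alpha> j k * \<alpha> k k - nn * \<alpha> k k * \<alpha> j k) * (z$j)\<^sup>2
     + \<alpha> k k * z$k * (z$j)^3"

definition dpoly :: "('p \<Rightarrow> 'p \<Rightarrow> real) \<Rightarrow> real^'p \<Rightarrow> 'p \<Rightarrow> 'p \<Rightarrow> real poly" where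
  "dpoly \<alpha> z j k = [: \<alpha> j j * (z$k)\<^sup>2 + \<alpha> j j * \<alpha> k k - (\<alpha> j k)\<^sup>2, - 2 * \<alpha> j k * z$k, \<alpha> k k :]"

definition qpoly :: "real \<Rightarrow> ('p \<Rightarrow> 'p \<Rightarrow> real) \<Rightarrow> real^'p \<Rightarrow> 'p \<Rightarrow> 'p \<Rightarrow> real poly" where
  "qpoly nn \<alpha> z j k = [: \<alpha> j k * (\<alpha> j j * (z$k)\<^sup>2 + \<alpha> j j * \<alpha> k k - (\<alpha> j k)\<^sup>2) - nn * \<alpha> j j * \<alpha> j k * (z$k)\<^sup>2,
     z$k * (\<alpha> j j * (z$k)\<^sup>2 + \<alpha> j j * \<alpha> k k - (\<alpha> j k)\<^sup>2) - 2 * (\<alpha> j k)\<^sup>2 * z$k + nn * \<alpha> j j * \<alpha> k k * z$k + nn * (\<alpha> j k)\<^sup>2 * z$k,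
     - 2 * \<alpha> j k * (z$k)\<^sup>2 + \<alpha> j k * \<alpha> k k - nn * \<alpha> k k * \<alpha> j k,
     \<alpha> k k * z$k :]"

lemma poly_dpoly: "poly (dpoly \<alpha> z j k) (z$j) = dval \<alpha> z j k"
  by (simp add: dpoly_def dval_def algebra_simps power2_eq_square)

lemma poly_qpoly: "poly (qpoly nn \<alpha> z j k) (z$j) = qval nn \<alpha> z j k"
  by (simp add: qpoly_def qval_def algebra_simps power2_eq_square power3_eq_cube)

lemma axis_other: "k \<noteq> j \<Longrightarrow> (z + t *\<^sub>R axis j (1::real)) $ k = z $ k"
  by (simp add: axis_def)

lemma negl_hyp: "negligible {z::real^'n. z$j = 0}"
proof (rule poly_line_negligible[where p="\<lambda>_. [:0, 1:]" and j=j and N=1])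
  have "{z::real^'n. z$j = 0} = {z \<in> space borel. z$j = 0}" by simp
  also have "\<dots> \<in> sets borel" by measurable
  finally show "{z::real^'n. z$j = 0} \<in> sets lebesgue" by (rule borel_imp_lebesgue)
qed auto

lemma negl_sq:
  assumes "nn \<noteq> 1"
  shows "negligible {z::real^'n. (nn - 1) * (z$j)\<^sup>2 - a = 0}"
proof (rule poly_line_negligible[where p="\<lambda>_. [:- a, 0, nn - 1:]" and j=j and N=2])
  have "{z::real^'n. (nn - 1) * (z$j)\<^sup>2 - a = 0} = {z \<in> space borel. (nn - 1) * (z$j)\<^sup>2 - a = 0}" by simp
  also have "\<dots> \<in> sets borel" by measurable
  finally show "{z::real^'n. (nn - 1) * (z$j)\<^sup>2 - a = 0} \<in> sets lebesgue" by (rule borel_imp_lebesgue)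
  show "\<And>z. [:- a, 0, nn - 1:] \<noteq> 0" using assms by simp
  show "\<And>z. degree [:- a, 0, nn - 1:] \<le> 2" by (simp add: degree_pCons_le)
qed (auto simp: algebra_simps power2_eq_square)

lemma negl_d:
  assumes jk: "j \<noteq> k" and b: "\<alpha> k k \<noteq> 0"
  shows "negligible {z::real^'n. z$k \<noteq> 0 \<and> dval \<alpha> z j k = 0}"
proof (rule poly_line_negligible[where p="\<lambda>z. if z$k = 0 then 1 else dpoly \<alpha> z j k" and j=j and N=2])
  have "{z::real^'n. z$k \<noteq> 0 \<and> dval \<alpha> z j k = 0} = {z \<in> space borel. z$k \<noteq> 0 \<and> dval \<alpha> z j k = 0}" by simp
  also have "\<dots> \<in> sets borel" unfolding dval_def by measurable
  finally show "{z::real^'n. z$k \<noteq> 0 \<and> dval \<alpha> z j k = 0} \<in> sets lebesgue" by (rule borel_imp_lebesgue)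
  show "\<And>z. z \<in> {z. z$k \<noteq> 0 \<and> dval \<alpha> z j k = 0} \<Longrightarrow> poly (if z$k = 0 then 1 else dpoly \<alpha> z j k) (z$j) = 0"
    by (simp add: poly_dpoly)
  show "\<And>z t. (if (z + t *\<^sub>R axis j 1)$k = 0 then 1 else dpoly \<alpha> (z + t *\<^sub>R axis j 1) j k) = (if z$k = 0 then 1 else dpoly \<alpha> z j k)"
  proof -
    fix z :: "real^'n" and t :: real
    have e: "(z + t *\<^sub>R axis j 1)$k = z$k" by (rule axis_other) (use jk in auto)
    have "dpoly \<alpha> (z + t *\<^sub>R axis j 1) j k = dpoly \<alpha> z j k" unfolding dpoly_def e ..
    then show "(if (z + t *\<^sub>R axis j 1)$k = 0 then 1 else dpoly \<alpha> (z + t *\<^sub>R axis j 1) j k) = (if z$k = 0 then 1 else dpoly \<alpha> z j k)"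
      unfolding e by simp
  qed
  show "\<And>z. (if z$k = 0 then 1 else dpoly \<alpha> z j k) \<noteq> 0"
  proof -
    fix z :: "real^'n"
    have "coeff (dpoly \<alpha> z j k) 2 \<noteq> 0" using b by (simp add: dpoly_def numeral_2_eq_2)
    then show "(if z$k = 0 then 1 else dpoly \<alpha> z j k) \<noteq> 0" by auto
  qed
  show "\<And>z. degree (if z$k = 0 then 1 else dpoly \<alpha> z j k) \<le> 2"
    by (simp add: dpoly_def degree_pCons_le)
qed

lemma negl_q:
  assumes jk: "j \<noteq> k" and b: "\<alpha> k k \<noteq> 0"
  shows "negligible {z::real^'n. z$k \<noteq> 0 \<and> qval nn \<alpha> z j k = 0}"
proof (rule poly_line_negligible[where p="\<lambda>z. if z$k = 0 then 1 else qpoly nn \<alpha> z j k" and j=j and N=3])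
  have "{z::real^'n. z$k \<noteq> 0 \<and> qval nn \<alpha> z j k = 0} = {z \<in> space borel. z$k \<noteq> 0 \<and> qval nn \<alpha> z j k = 0}" by simp
  also have "\<dots> \<in> sets borel" unfolding qval_def by measurable
  finally show "{z::real^'n. z$k \<noteq> 0 \<and> qval nn \<alpha> z j k = 0} \<in> sets lebesgue" by (rule borel_imp_lebesgue)
  show "\<And>z. z \<in> {z. z$k \<noteq> 0 \<and> qval nn \<alpha> z j k = 0} \<Longrightarrow> poly (if z$k = 0 then 1 else qpoly nn \<alpha> z j k) (z$j) = 0"
    by (simp add: poly_qpoly)
  show "\<And>z t. (if (z + t *\<^sub>R axis j 1)$k = 0 then 1 else qpoly nn \<alpha> (z + t *\<^sub>R axis j 1) j k) = (if z$k = 0 then 1 else qpoly nn \<alpha> z j k)"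
  proof -
    fix z :: "real^'n" and t :: real
    have e: "(z + t *\<^sub>R axis j 1)$k = z$k" by (rule axis_other) (use jk in auto)
    have "qpoly nn \<alpha> (z + t *\<^sub>R axis j 1) j k = qpoly nn \<alpha> z j k" unfolding qpoly_def e ..
    then show "(if (z + t *\<^sub>R axis j 1)$k = 0 then 1 else qpoly nn \<alpha> (z + t *\<^sub>R axis j 1) j k) = (if z$k = 0 then 1 else qpoly nn \<alpha> z j k)"
      unfolding e by simp
  qed
  show "\<And>z. (if z$k = 0 then 1 else qpoly nn \<alpha> z j k) \<noteq> 0"
  proof -
    fix z :: "real^'n"
    show "(if z$k = 0 then 1 else qpoly nn \<alpha> z j k) \<noteq> 0"
    proof (cases "z$k = 0")
      case False
      have "coeff (qpoly nn \<alpha> z j k) 3 \<noteq> 0" using b False by (simp add: qpoly_def numeral_3_eq_3)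
      then show ?thesis by auto
    qed simp
  qed
  show "\<And>z. degree (if z$k = 0 then 1 else qpoly nn \<alpha> z j k) \<le> 3"
    by (simp add: qpoly_def degree_pCons_le)
qed


definition Bad :: "real \<Rightarrow> ('p::{finite,linorder} \<Rightarrow> 'p::{finite,linorder} \<Rightarrow> real) \<Rightarrow> real^'p::{finite,linorder} \<Rightarrow> bool" where
  "Bad nn \<alpha> z \<longleftrightarrow> (\<exists>j. z$j = 0) \<or> (\<exists>j. (nn - 1) * (z$j)\<^sup>2 - \<alpha> j j = 0) \<or>
     (\<exists>j k. j < k \<and> z$k \<noteq> 0 \<and> dval \<alpha> z j k = 0) \<or> (\<exists>j k. j < k \<and> z$k \<noteq> 0 \<and> qval nn \<alpha> z j k = 0)"

lemma Bad_negl: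
  fixes \<alpha> :: "'p::{finite,linorder} \<Rightarrow> 'p \<Rightarrow> real"
  assumes nn: "nn \<noteq> 1" and b: "\<And>k. \<alpha> k k \<noteq> 0"
  shows "negligible {z::real^'p::{finite,linorder}. Bad nn \<alpha> z}"
proof -
  have eq: "{z::real^'p::{finite,linorder}. Bad nn \<alpha> z} = (\<Union>j. {z. z$j = 0}) \<union> (\<Union>j. {z. (nn - 1) * (z$j)\<^sup>2 - \<alpha> j j = 0})
     \<union> (\<Union>jk\<in>{(j,k). j < k}. {z. z$(snd jk) \<noteq> 0 \<and> dval \<alpha> z (fst jk) (snd jk) = 0})
     \<union> (\<Union>jk\<in>{(j,k). j < k}. {z. z$(snd jk) \<noteq> 0 \<and> qval nn \<alpha> z (fst jk) (snd jk) = 0})"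
    unfolding Bad_def by auto
  have sq: "negligible {z::real^'p::{finite,linorder}. (nn - 1) * (z$j)\<^sup>2 = \<alpha> j j}" for j
    using negl_sq[OF nn, of j "\<alpha> j j"] by simp
  show ?thesis unfolding eq
    by (intro negligible_Un negligible_Union finite_imageI) (auto intro!: negl_hyp sq negl_d negl_q b)
qed

lemma Smat_split:
  fixes x :: "nat \<Rightarrow> real^'p::{finite,linorder}"
  assumes n: "n \<ge> 1" and a: "a \<in> idx"
  shows "Smat n x a = (x 0 $ fst a * x 0 $ snd a + (\<Sum>i\<in>{1..<n}. x i $ fst a * x i $ snd a)) / real n"
proof -
  have "{..<n} = insert 0 {1..<n}" using n by auto
  then show ?thesis using a by (simp add: Smat_def)
qed

lemma ds_ident:
  fixes n x y a b g :: real
  assumes "n \<noteq> 0"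
  shows "n\<^sup>2 * (((x\<^sup>2 + a) / n) * ((y\<^sup>2 + b) / n) - ((x * y + g) / n)\<^sup>2) =
         b * x\<^sup>2 - 2 * g * y * x + a * y\<^sup>2 + a * b - g\<^sup>2"
  using assms by (simp add: field_simps power2_eq_square)

lemma qs_ident:
  fixes n x y a b g :: real
  assumes "n \<noteq> 0"
  shows "n^3 * (((x * y + g) / n) * (((x\<^sup>2 + a) / n) * ((y\<^sup>2 + b) / n) - ((x * y + g) / n)\<^sup>2)
          + x * y * (((x\<^sup>2 + a) / n) * ((y\<^sup>2 + b) / n) - ((x * y + g) / n)\<^sup>2)
          - ((x * y + g) / n) * (((y\<^sup>2 + b) / n) * x\<^sup>2 + ((x\<^sup>2 + a) / n) * y\<^sup>2 - 2 * ((x * y + g) / n) * x * y)) =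
     (g * (a * y\<^sup>2 + a * b - g\<^sup>2) - n * a * g * y\<^sup>2)
     + (y * (a * y\<^sup>2 + a * b - g\<^sup>2) - 2 * g\<^sup>2 * y + n * a * b * y + n * g\<^sup>2 * y) * x
     + (- 2 * g * y\<^sup>2 + g * b - n * b * g) * x\<^sup>2
     + b * y * x^3"
  using assms by (simp add: field_simps power2_eq_square power3_eq_cube)


lemma bridge:
  fixes x :: "nat \<Rightarrow> real^'p::{finite,linorder}"
  assumes n: "n \<ge> 2"
    and nb: "\<not> Bad (real n) (\<lambda>j k. \<Sum>i\<in>{1..<n}. x i $ j * x i $ k) (x 0)"
  shows "goodS n x"
proof -
  define \<alpha> where "\<alpha> j k = (\<Sum>i\<in>{1..<n}. x i $ j * x i $ k)" for j k
  define z where "z = x 0"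
  have ae: "\<alpha> = (\<lambda>j k. \<Sum>i\<in>{1..<n}. x i $ j * x i $ k)" by (intro ext) (simp add: \<alpha>_def)
  have nb': "\<not> Bad (real n) \<alpha> z" using nb unfolding ae z_def .
  have n1: "n \<ge> 1" using n by simp
  have nz: "real n \<noteq> 0" using n by simp
  have S: "Smat n x (j,k) = (z$j * z$k + \<alpha> j k) / real n" if "j \<le> k" for j k
    using Smat_split[OF n1, of "(j,k)" x] that by (simp add: idx_def \<alpha>_def z_def)
  have Sd: "Smat n x (j,j) = ((z$j)\<^sup>2 + \<alpha> j j) / real n" for j
    using S[of j j] by (simp add: power2_eq_square)
  have zj: "z$j \<noteq> 0" for j using nb' by (auto simp: Bad_def)
  have a0: "\<alpha> j j \<ge> 0" for j unfolding \<alpha>_def by (intro sum_nonneg) simp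
  have G1: "Smat n x (j,j) > 0" for j
  proof -
    have "(z$j)\<^sup>2 > 0" using zj[of j] by simp
    then show ?thesis using a0[of j] n unfolding Sd by (simp add: divide_pos_pos add_pos_nonneg)
  qed
  have G2: "(x 0 $ j)\<^sup>2 \<noteq> Smat n x (j,j)" for j
  proof
    assume "(x 0 $ j)\<^sup>2 = Smat n x (j,j)"
    then have "real n * (z$j)\<^sup>2 = (z$j)\<^sup>2 + \<alpha> j j" unfolding Sd z_def[symmetric] using nz
      by (simp add: field_simps)
    then have "(real n - 1) * (z$j)\<^sup>2 - \<alpha> j j = 0" by (simp add: algebra_simps)
    then show False using nb' by (auto simp: Bad_def)
  qed
  have G34: "DS (Smat n x) j k \<noteq> 0 \<and> QS (Smat n x) (x 0) j k \<noteq> 0" if jk: "j < k" for j k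
  proof -
    have Sjk: "Smat n x (j,k) = (z$j * z$k + \<alpha> j k) / real n" using S jk by simp
    have Skk: "Smat n x (k,k) = ((z$k)\<^sup>2 + \<alpha> k k) / real n" by (rule Sd)
    have Sjj: "Smat n x (j,j) = ((z$j)\<^sup>2 + \<alpha> j j) / real n" by (rule Sd)
    have dv: "dval \<alpha> z j k \<noteq> 0" using nb' jk zj[of k] by (auto simp: Bad_def)
    have qv: "qval (real n) \<alpha> z j k \<noteq> 0" using nb' jk zj[of k] by (auto simp: Bad_def)
    have "(real n)\<^sup>2 * DS (Smat n x) j k = dval \<alpha> z j k"
      unfolding DS_def Sjk Skk Sjj dval_def using ds_ident[OF nz, of "z$j" "\<alpha> j j" "z$k" "\<alpha> k k" "\<alpha> j k"]
      by (simp add: algebra_simps)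
    then have d: "DS (Smat n x) j k \<noteq> 0" using dv by auto
    have "(real n)^3 * QS (Smat n x) (x 0) j k = qval (real n) \<alpha> z j k"
      unfolding QS_def DS_def Sjk Skk Sjj qval_def z_def[symmetric]
      using qs_ident[OF nz, of "z$j" "z$k" "\<alpha> j k" "\<alpha> j j" "\<alpha> k k"]
      by (simp add: algebra_simps)
    then have q: "QS (Smat n x) (x 0) j k \<noteq> 0" using qv by auto
    show ?thesis using d q by simp
  qed
  show ?thesis unfolding goodS_def using G1 G2 G34 by blast
qed


lemma AE_good:
  fixes M :: "'a measure" and X :: "nat \<Rightarrow> 'a \<Rightarrow> real^'p::{finite,linorder}"
  assumes P: "prob_space M" and n: "n \<ge> 2"
    and meas: "\<And>i. X i \<in> borel_measurable M"
    and ind: "prob_space.indep_vars M (\<lambda>_. borel) X {..<n}"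
    and dist: "\<And>i. i < n \<Longrightarrow> distr M borel (X i) = distr M borel (X 0)"
    and ac: "absolutely_continuous lborel (distr M lborel (X 0))"
  shows "AE \<omega> in M. goodS n (\<lambda>i. X i \<omega>)"
proof -
  interpret prob_space M by (rule P)
  define A :: "(nat \<Rightarrow> real^'p::{finite,linorder}) \<Rightarrow> 'p::{finite,linorder} \<Rightarrow> 'p::{finite,linorder} \<Rightarrow> real" where "A f j k = (\<Sum>i\<in>{1..<n}. f i $ j * f i $ k)" for f j k
  define Y where "Y \<omega> = restrict (\<lambda>i. X i \<omega>) {1..<n}" for \<omega>
  define PM where "PM = PiM {1..<n} (\<lambda>_. borel :: (real^'p::{finite,linorder}) measure)"
  have nullX0: "emeasure M (X 0 -` B \<inter> space M) = 0" if Bb: "B \<in> sets borel" and Bn: "negligible B" for B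
  proof -
    have "B \<in> null_sets lebesgue" using Bn by (simp add: negligible_iff_null_sets)
    then have "B \<in> null_sets lborel" using null_sets_completion_iff[of B lborel] Bb by (simp add: sets_lborel)
    then have "B \<in> null_sets (distr M lborel (X 0))" using ac unfolding absolutely_continuous_def by auto
    then have "emeasure (distr M lborel (X 0)) B = 0" by auto
    moreover have "emeasure (distr M lborel (X 0)) B = emeasure M (X 0 -` B \<inter> space M)"
      by (rule emeasure_distr) (use meas Bb in \<open>auto simp: sets_lborel\<close>)
    ultimately show ?thesis by simp
  qed
  define H where "H = {z::real^'p::{finite,linorder}. \<exists>k. z$k = 0}"
  have Hb: "H \<in> sets borel"
  proof -
    have "H = {z \<in> space borel. \<exists>k. z$k = 0}" by (simp add: H_def)
    also have "\<dots> \<in> sets borel" by measurable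
    finally show ?thesis .
  qed
  have Hn: "negligible H"
  proof -
    have "H = (\<Union>k. {z. z$k = 0})" by (auto simp: H_def)
    then show ?thesis by (auto intro!: negligible_Union negl_hyp)
  qed
  have n1: "1 < n" using n by simp
  have N2: "emeasure M (X 1 -` H \<inter> space M) = 0"
  proof -
    have "emeasure M (X 1 -` H \<inter> space M) = emeasure (distr M borel (X 1)) H"
      by (rule emeasure_distr[symmetric]) (use meas Hb in auto)
    also have "\<dots> = emeasure (distr M borel (X 0)) H" using dist[OF n1] by simp
    also have "\<dots> = emeasure M (X 0 -` H \<inter> space M)"
      by (rule emeasure_distr) (use meas Hb in auto)
    also have "\<dots> = 0" by (rule nullX0[OF Hb Hn])
    finally show ?thesis .
  qed
  define X0' where "X0' \<omega> = restrict (\<lambda>i. X i \<omega>) {0}" for \<omega>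
  define P0 where "P0 = PiM {0::nat} (\<lambda>_. borel :: (real^'p::{finite,linorder}) measure)"
  have ind2: "indep_var P0 X0' PM Y"
    unfolding PM_def P0_def X0'_def Y_def by (rule indep_var_restrict[OF ind]) (use n in auto)
  have rvY: "random_variable PM Y" using indep_var_rv2[OF ind2] .
  have rvX: "random_variable P0 X0'" using indep_var_rv1[OF ind2] .
  have joint: "distr M P0 X0' \<Otimes>\<^sub>M distr M PM Y = distr M (P0 \<Otimes>\<^sub>M PM) (\<lambda>\<omega>. (X0' \<omega>, Y \<omega>))"
    using ind2 indep_var_distribution_eq by blast
  have X0'0: "X0' \<omega> 0 = X 0 \<omega>" for \<omega> by (simp add: X0'_def)
  define BB where "BB = {p \<in> space (P0 \<Otimes>\<^sub>M PM). Bad (real n) (A (snd p)) (fst p 0) \<and> (\<forall>k. A (snd p) k k > 0)}"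
  have BBm: "BB \<in> sets (P0 \<Otimes>\<^sub>M PM)"
    unfolding BB_def A_def Bad_def dval_def qval_def PM_def P0_def by measurable
  have ev0: "(\<lambda>g. g 0) \<in> measurable P0 borel" unfolding P0_def by measurable
  have zeroBB: "emeasure (distr M P0 X0' \<Otimes>\<^sub>M distr M PM Y) BB = 0"
  proof -
    interpret X0: prob_space "distr M P0 X0'" by (rule prob_space_distr) (rule rvX)
    interpret Y0: prob_space "distr M PM Y" by (rule prob_space_distr) (rule rvY)
    interpret XY: pair_prob_space "distr M P0 X0'" "distr M PM Y" ..
    have "emeasure (distr M P0 X0' \<Otimes>\<^sub>M distr M PM Y) BB =
        (\<integral>\<^sup>+ y. emeasure (distr M P0 X0') ((\<lambda>x. (x, y)) -` BB) \<partial>(distr M PM Y))"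
      by (rule XY.emeasure_pair_measure_alt2) (simp add: BBm)
    also have "\<dots> = (\<integral>\<^sup>+ y. 0 \<partial>(distr M PM Y))"
    proof (rule nn_integral_cong)
      fix y assume "y \<in> space (distr M PM Y)"
      show "emeasure (distr M P0 X0') ((\<lambda>x. (x, y)) -` BB) = 0"
      proof (cases "\<forall>k. A y k k > 0")
        case True
        define B where "B = {z. Bad (real n) (A y) z}"
        define C where "C = (\<lambda>g. g 0) -` B \<inter> space P0"
        have sub: "(\<lambda>x. (x, y)) -` BB \<subseteq> C" by (auto simp: BB_def B_def C_def space_pair_measure)
        have Bm: "B \<in> sets borel"
        proof -
          have "B = {z \<in> space borel. Bad (real n) (A y) z}" by (simp add: B_def)
          also have "\<dots> \<in> sets borel" unfolding Bad_def dval_def qval_def by measurable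
          finally show ?thesis .
        qed
        have Cm: "C \<in> sets P0" unfolding C_def by (rule measurable_sets[OF ev0 Bm])
        have Bn: "negligible B" unfolding B_def
          by (rule Bad_negl) (use n True in \<open>auto simp: less_imp_neq[symmetric]\<close>)
        have "emeasure (distr M P0 X0') C = emeasure M (X0' -` C \<inter> space M)"
          by (rule emeasure_distr[OF rvX Cm])
        also have "X0' -` C \<inter> space M = X 0 -` B \<inter> space M"
          using measurable_space[OF rvX] by (auto simp: C_def X0'0)
        also have "emeasure M (X 0 -` B \<inter> space M) = 0" by (rule nullX0[OF Bm Bn])
        finally have "emeasure (distr M P0 X0') C = 0" .
        moreover have "emeasure (distr M P0 X0') ((\<lambda>x. (x, y)) -` BB) \<le> emeasure (distr M P0 X0') C"
          by (rule emeasure_mono[OF sub]) (simp add: Cm)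
        ultimately show ?thesis by simp
      next
        case False
        then have "(\<lambda>x. (x, y)) -` BB = {}" by (auto simp: BB_def)
        then show ?thesis by simp
      qed
    qed
    also have "\<dots> = 0" by simp
    finally show ?thesis .
  qed
  have XYm: "(\<lambda>\<omega>. (X0' \<omega>, Y \<omega>)) \<in> measurable M (P0 \<Otimes>\<^sub>M PM)"
    by (rule measurable_Pair[OF rvX rvY])
  have N1: "emeasure M ((\<lambda>\<omega>. (X0' \<omega>, Y \<omega>)) -` BB \<inter> space M) = 0"
  proof -
    have "emeasure M ((\<lambda>\<omega>. (X0' \<omega>, Y \<omega>)) -` BB \<inter> space M) = emeasure (distr M (P0 \<Otimes>\<^sub>M PM) (\<lambda>\<omega>. (X0' \<omega>, Y \<omega>))) BB"
      by (rule emeasure_distr[symmetric, OF XYm BBm])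
    also have "\<dots> = 0" using zeroBB joint by simp
    finally show ?thesis .
  qed
  define N where "N = ((\<lambda>\<omega>. (X0' \<omega>, Y \<omega>)) -` BB \<inter> space M) \<union> (X 1 -` H \<inter> space M)"
  have Nnull: "N \<in> null_sets M"
  proof -
    have "(\<lambda>\<omega>. (X0' \<omega>, Y \<omega>)) -` BB \<inter> space M \<in> null_sets M"
      using N1 measurable_sets[OF XYm BBm] by auto
    moreover have "X 1 -` H \<inter> space M \<in> null_sets M"
      using N2 measurable_sets[OF meas Hb] by auto
    ultimately show ?thesis unfolding N_def by (rule null_sets.Un)
  qed
  show ?thesis
  proof (rule AE_I'[OF Nnull], rule subsetI)
    fix \<omega> assume "\<omega> \<in> {\<omega> \<in> space M. \<not> goodS n (\<lambda>i. X i \<omega>)}"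
    then have \<omega>: "\<omega> \<in> space M" and ng: "\<not> goodS n (\<lambda>i. X i \<omega>)" by auto
    show "\<omega> \<in> N"
    proof (rule ccontr)
      assume "\<omega> \<notin> N"
      then have nH: "X 1 \<omega> \<notin> H" and nBB: "(X0' \<omega>, Y \<omega>) \<notin> BB" using \<omega> by (auto simp: N_def)
      have AY: "A (Y \<omega>) = (\<lambda>j k. \<Sum>i\<in>{1..<n}. X i \<omega> $ j * X i \<omega> $ k)"
        by (intro ext) (auto simp: A_def Y_def intro!: sum.cong)
      have pos: "\<forall>k. A (Y \<omega>) k k > 0"
      proof
        fix k
        have x1: "X 1 \<omega> $ k \<noteq> 0" using nH by (auto simp: H_def)
        have "0 < X 1 \<omega> $ k * X 1 \<omega> $ k" using x1 by (metis mult_neg_neg mult_pos_pos linorder_neq_iff)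
        also have "\<dots> \<le> (\<Sum>i\<in>{1..<n}. X i \<omega> $ k * X i \<omega> $ k)"
          by (rule member_le_sum[of 1 "{1..<n}" "\<lambda>i. X i \<omega> $ k * X i \<omega> $ k"]) (use n1 in auto)
        finally show "A (Y \<omega>) k k > 0" unfolding AY .
      qed
      have sp: "(X0' \<omega>, Y \<omega>) \<in> space (P0 \<Otimes>\<^sub>M PM)" using measurable_space[OF XYm \<omega>] .
      have "\<not> Bad (real n) (A (Y \<omega>)) (X0' \<omega> 0)" using nBB pos sp by (auto simp: BB_def)
      then have "\<not> Bad (real n) (A (Y \<omega>)) (X 0 \<omega>)" by (simp add: X0'0)
      then have "goodS n (\<lambda>i. X i \<omega>)" unfolding AY by (rule bridge[OF n])
      then show False using ng by simp
    qed
  qed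
qed


theorem theorem1:
  fixes M :: "'a measure" and X :: "nat \<Rightarrow> 'a \<Rightarrow> real^'p::{finite,linorder}"
    and n :: nat and lam :: real
  assumes "prob_space M"
    and "n \<ge> 2" and "lam \<ge> 0"
    and "\<And>i. X i \<in> borel_measurable M"
    and "prob_space.indep_vars M (\<lambda>_. borel) X {..<n}"
    and "\<And>i. i < n \<Longrightarrow> distr M borel (X i) = distr M borel (X 0)"
    and "absolutely_continuous lborel (distr M lborel (X 0))"
    and "\<And>j. integrable M (\<lambda>\<omega>. (X 0 \<omega> $ j)^2)"
    and "\<And>j. integrable M (\<lambda>\<omega>. X 0 \<omega> $ j) \<and> (\<integral>\<omega>. X 0 \<omega> $ j \<partial>M) = 0"
    and "\<And>v :: real^'p::{finite,linorder}. v \<noteq> 0 \<Longrightarrow>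
           (\<Sum>j\<in>UNIV. \<Sum>k\<in>UNIV. v$j * v$k * (\<integral>\<omega>. X 0 \<omega> $ j * X 0 \<omega> $ k \<partial>M)) > 0"
  shows "AE \<omega> in M. \<exists>w.
           is_minimizer lam n (\<lambda>i. X i \<omega>) w \<and>
           (\<forall>v. is_minimizer lam n (\<lambda>i. X i \<omega>) v \<longrightarrow> v = w) \<and>
           (\<exists>\<eta>. is_subgrad n (\<lambda>i. X i \<omega>) w \<eta> \<and>
              (let E = Ehat lam n (\<lambda>i. X i \<omega>) w; J = Jhat n (\<lambda>i. X i \<omega>) in
                invertible_on E J \<and>
                (\<forall>a\<in>E. w a = (\<Sum>b\<in>E. mat_inv_on E J a b * (J b b - (lam / real n) * \<eta> b))) \<and>
                (\<forall>a\<in>idx - E. w a = 0)))"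
proof -
  have AEg: "AE \<omega> in M. goodS n (\<lambda>i. X i \<omega>)"
    by (rule AE_good[OF assms(1) assms(2) assms(4) assms(5) assms(6) assms(7)])
  have npos: "n > 0" using assms(2) by simp
  show ?thesis
  proof (rule AE_mp[OF AEg], rule AE_I2, rule impI)
    fix \<omega> assume g: "goodS n (\<lambda>i. X i \<omega>)"
    show "\<exists>w. is_minimizer lam n (\<lambda>i. X i \<omega>) w \<and>
           (\<forall>v. is_minimizer lam n (\<lambda>i. X i \<omega>) v \<longrightarrow> v = w) \<and>
           (\<exists>\<eta>. is_subgrad n (\<lambda>i. X i \<omega>) w \<eta> \<and>
              (let E = Ehat lam n (\<lambda>i. X i \<omega>) w; J = Jhat n (\<lambda>i. X i \<omega>) in
                invertible_on E J \<and>
                (\<forall>a\<in>E. w a = (\<Sum>b\<in>E. mat_inv_on E J a b * (J b b - (lam / real n) * \<eta> b))) \<and>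
                (\<forall>a\<in>idx - E. w a = 0)))"
      apply (rule det_main[OF assms(3) npos])
      using good_pd[OF npos g] by blast
  qed
qed

end
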